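(* Let $w\in S_n$ with $\ell=\ell(w)$, and let $\mathbf{u}$ and $\mathbf{u}_c$ be reduced words for $w$ such that $\mathbf{u}_c$ is obtained from $\mathbf{u}$ by a single commutation. Then $\deg(\Phi_{\mathbf{u}_c}^{-1}\circ\Phi_{\mathbf{u}})=-1$.
   Context: $S_n$ is generated by $s_m=(m,m+1)$; a commutation replaces two adjacent letters $s_as_b$ with $|a-b|\geq2$ in a word by $s_bs_a$. Let $\mathbb{F}=\mathrm{Sl}_n(\mathbb{R})/P$ be the maximal real flag manifold (complete flags in $\mathbb{R}^n$), with base point $b_0$ the standard flag $\langle e_1\rangle\subset\langle e_1,e_2\rangle\subset\cdots$. For $m\in[n-1]$ let $A_m=E_{m,m+1}-E_{m+1,m}$, where $E_{k,l}$ is the matrix unit, so $e^{tA_m}$ is a rotation in the $(m,m+1)$-plane. For a reduced word $\mathbf{u}=s_{r_1}\cdots s_{r_\ell}$ of $w$, define $\Phi_{\mathbf{u}}:[0,\pi]^\ell\to\mathbb{F}$ by $\Phi_{\mathbf{u}}(t_1,\dots,t_\ell)=e^{t_1A_{r_1}}\cdots e^{t_\ell A_{r_\ell}}\cdot b_0$. This is a characteristic map of the Schubert cell of $w$: it maps the open cube diffeomorphically onto the open Bruhat cell $N\cdot wb_0$ and the boundary of the cube outside this open cell. Hence for two reduced words $\mathbf{u},\mathbf{v}$ of $w$, $\Phi_{\mathbf{v}}^{-1}\circ\Phi_{\mathbf{u}}$ induces a homeomorphism of the sphere $S^\ell=[0,\pi]^\ell/\partial[0,\pi]^\ell$, and $\deg$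 denotes its degree. *)

theory Defs
  imports "HOL-Homology.Homology" "HOL-Combinatorics.Permutations"
begin

text \<open>A word is a list of indices r, standing for s_{r_1} ... s_{r_l}, s_m = (m, m+1).
  Permutations of {1..n} are functions nat => nat permuting {1..n}.\<close>

definition sgen :: "nat \<Rightarrow> nat \<Rightarrow> nat" where
  "sgen m = Transposition.transpose m (Suc m)"

definition word_perm :: "nat list \<Rightarrow> nat \<Rightarrow> nat" where
  "word_perm u = foldr (\<lambda>r p. sgen r \<circ> p) u id"

definition is_word :: "nat \<Rightarrow> nat list \<Rightarrow> bool" where
  "is_word n u \<longleftrightarrow> (\<forall>r \<in> set u. 1 \<le> r \<and> r \<le> n - 1)"

definition perm_length :: "nat \<Rightarrow> (nat \<Rightarrow> nat) \<Rightarrow> nat" where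
  "perm_length n w = (LEAST k. \<exists>u. is_word n u \<and> length u = k \<and> word_perm u = w)"

definition reduced_word :: "nat \<Rightarrow> (nat \<Rightarrow> nat) \<Rightarrow> nat list \<Rightarrow> bool" where
  "reduced_word n w u \<longleftrightarrow> is_word n u \<and> word_perm u = w \<and> length u = perm_length n w"

definition one_commutation :: "nat list \<Rightarrow> nat list \<Rightarrow> bool" where
  "one_commutation u v \<longleftrightarrow>
     (\<exists>p q a b. 2 \<le> \<bar>int a - int b\<bar> \<and> u = p @ [a, b] @ q \<and> v = p @ [b, a] @ q)"

type_synonym rmat = "nat \<Rightarrow> nat \<Rightarrow> real"

definition mat_id :: "nat \<Rightarrow> rmat" where
  "mat_id n = (\<lambda>i j. if i \<in> {1..n} \<and> i = j then 1 else 0)"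

definition mat_mul :: "nat \<Rightarrow> rmat \<Rightarrow> rmat \<Rightarrow> rmat" where
  "mat_mul n A B = (\<lambda>i k. \<Sum>j\<in>{1..n}. A i j * B j k)"

text \<open>e^{t A_m} with A_m = E_{m,m+1} - E_{m+1,m}: the rotation by t in the (m,m+1)-plane,
  written out explicitly (exp of the 2x2 block [[0,1],[-1,0]] is [[cos t, sin t],[-sin t, cos t]]).\<close>
definition rot :: "nat \<Rightarrow> nat \<Rightarrow> real \<Rightarrow> rmat" where
  "rot n m t = (\<lambda>i j.
     if i = m \<and> j = m then cos t
     else if i = m \<and> j = Suc m then sin t
     else if i = Suc m \<and> j = m then - sin t
     else if i = Suc m \<and> j = Suc m then cos t
     else mat_id n i j)"

fun mat_prod :: "nat \<Rightarrow> rmat list \<Rightarrow> rmat" where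
  "mat_prod n [] = mat_id n"
| "mat_prod n (A # As) = mat_mul n A (mat_prod n As)"

text \<open>The flag g . b_0: its k-th subspace is spanned by the first k columns of g.\<close>
definition flag_of :: "nat \<Rightarrow> rmat \<Rightarrow> nat \<Rightarrow> (nat \<Rightarrow> real) set" where
  "flag_of n g k = (if k \<in> {1..n} then
      {v. \<exists>c. v = (\<lambda>i. if i \<in> {1..n} then \<Sum>j\<in>{1..k}. c j * g i j else 0)} else {})"

text \<open>Phi_u(t_1,...,t_l); cube coordinates are t 0, ..., t (l-1).\<close>
definition Phi :: "nat \<Rightarrow> nat list \<Rightarrow> (nat \<Rightarrow> real) \<Rightarrow> nat \<Rightarrow> (nat \<Rightarrow> real) set" where
  "Phi n u t = flag_of n (mat_prod n (map (\<lambda>i. rot n (u ! i) (t i)) [0..<length u]))"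

definition cube :: "nat \<Rightarrow> (nat \<Rightarrow> real) set" where
  "cube l = {t. (\<forall>i<l. 0 \<le> t i \<and> t i \<le> pi) \<and> (\<forall>i\<ge>l. t i = 0)}"

definition open_cube :: "nat \<Rightarrow> (nat \<Rightarrow> real) set" where
  "open_cube l = {t. (\<forall>i<l. 0 < t i \<and> t i < pi) \<and> (\<forall>i\<ge>l. t i = 0)}"

definition quotient_topology :: "'a topology \<Rightarrow> ('a \<Rightarrow> 'b) \<Rightarrow> 'b topology" where
  "quotient_topology X q =
     topology (\<lambda>U. U \<subseteq> q ` topspace X \<and> openin X {x \<in> topspace X. q x \<in> U})"

text \<open>Collapsing the boundary to the point None.\<close>
definition collapse :: "nat \<Rightarrow> (nat \<Rightarrow> real) \<Rightarrow> (nat \<Rightarrow> real) option" where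
  "collapse l t = (if t \<in> open_cube l then Some t else None)"

definition cube_sphere :: "nat \<Rightarrow> (nat \<Rightarrow> real) option topology" where
  "cube_sphere l = quotient_topology (subtopology (powertop_real UNIV) (cube l)) (collapse l)"

text \<open>The self-map of the sphere induced by Phi_v^{-1} o Phi_u.\<close>
definition transition :: "nat \<Rightarrow> nat list \<Rightarrow> nat list \<Rightarrow>
    (nat \<Rightarrow> real) option \<Rightarrow> (nat \<Rightarrow> real) option" where
  "transition n u v x = (case x of None \<Rightarrow> None
     | Some t \<Rightarrow> Some (THE s. s \<in> open_cube (length v) \<and> Phi n v s = Phi n u t))"

text \<open>Degree of a self-map of a space homeomorphic to S^l, via its action on
  reduced homology in degree l (as in Brouwer_degree2).\<close>
definition map_degree :: "nat \<Rightarrow> 'a topology \<Rightarrow> ('a \<Rightarrow> 'a) \<Rightarrow> int" where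
  "map_degree l X f =
    (SOME d::int. \<forall>x \<in> carrier (reduced_homology_group (int l) X).
        hom_induced (int l) X {} X {} f x = pow (reduced_homology_group (int l) X) x d)"

end

theory Submission
  imports Defs
begin


lemma sgen_apply: "sgen r x = (if x = r then Suc r else if x = Suc r then r else x)"
  by (simp add: sgen_def Transposition.transpose_def)

lemma sgen_sgen[simp]: "sgen r (sgen r x) = x"
  by (simp add: sgen_apply)

lemma sgen_comp_sgen[simp]: "w \<circ> sgen r \<circ> sgen r = w"
  by (rule ext) simp

lemma foldr_word_perm: "foldr (\<lambda>r p. sgen r \<circ> p) u q = word_perm u \<circ> q"
  by (induction u arbitrary: q) (auto simp: word_perm_def)

lemma word_perm_Nil[simp]: "word_perm [] = id"
  by (simp add: word_perm_def)

lemma word_perm_Cons: "word_perm (r # u) = sgen r \<circ> word_perm u"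
  by (simp add: word_perm_def)

lemma word_perm_append: "word_perm (u @ v) = word_perm u \<circ> word_perm v"
proof -
  have "word_perm (u @ v) = foldr (\<lambda>r p. sgen r \<circ> p) u (word_perm v)"
    by (simp add: word_perm_def)
  also have "\<dots> = word_perm u \<circ> word_perm v" by (rule foldr_word_perm)
  finally show ?thesis .
qed

lemma word_perm_snoc: "word_perm (u @ [r]) = word_perm u \<circ> sgen r"
  by (simp add: word_perm_append word_perm_Cons)

lemma is_word_append[simp]: "is_word n (u @ v) \<longleftrightarrow> is_word n u \<and> is_word n v"
  by (auto simp: is_word_def)

lemma is_word_Cons[simp]: "is_word n (r # v) \<longleftrightarrow> 1 \<le> r \<and> r \<le> n - 1 \<and> is_word n v"
  by (auto simp: is_word_def)

lemma is_word_Nil[simp]: "is_word n []"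
  by (auto simp: is_word_def)

lemma sgen_permutes: "1 \<le> r \<Longrightarrow> r \<le> n - 1 \<Longrightarrow> sgen r permutes {1..n}"
  unfolding sgen_def by (rule permutes_swap_id) auto

lemma word_perm_permutes: "is_word n u \<Longrightarrow> word_perm u permutes {1..n}"
proof (induction u)
  case Nil then show ?case by (metis word_perm_Nil permutes_id)
next
  case (Cons r u)
  then have "sgen r \<circ> word_perm u permutes {1..n}"
    by (intro permutes_compose sgen_permutes) auto
  then show ?case by (metis word_perm_Cons)
qed

definition invs :: "nat \<Rightarrow> (nat \<Rightarrow> nat) \<Rightarrow> (nat \<times> nat) set" where
  "invs n w = {(i,j). i \<in> {1..n} \<and> j \<in> {1..n} \<and> i < j \<and> w j < w i}"

definition ninv :: "nat \<Rightarrow> (nat \<Rightarrow> nat) \<Rightarrow> nat" where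
  "ninv n w = card (invs n w)"

lemma finite_invs[simp]: "finite (invs n w)"
  by (rule finite_subset[of _ "{1..n} \<times> {1..n}"]) (auto simp: invs_def)

lemma sgen_mono:
  assumes "i < j" "(i,j) \<noteq> (r, Suc r)"
  shows "sgen r i < sgen r j"
  using assms unfolding sgen_apply by auto

lemma sgen_range: "1 \<le> r \<Longrightarrow> r < n \<Longrightarrow> i \<in> {1..n} \<Longrightarrow> sgen r i \<in> {1..n}"
  unfolding sgen_apply by auto

lemma ninv_step_up:
  assumes "1 \<le> r" "r < n" "w r < w (Suc r)"
  shows "ninv n (w \<circ> sgen r) = Suc (ninv n w)"
proof -
  define s where "s = sgen r"
  define P where "P = (\<lambda>(i::nat,j::nat). (s i, s j))"
  have ss: "s (s x) = x" for x by (simp add: s_def)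
  have sr: "s r = Suc r" "s (Suc r) = r" by (auto simp: s_def sgen_apply)
  have mono: "i < j \<Longrightarrow> (i,j) \<noteq> (r, Suc r) \<Longrightarrow> s i < s j" for i j
    unfolding s_def by (rule sgen_mono)
  have rng: "i \<in> {1..n} \<Longrightarrow> s i \<in> {1..n}" for i
    unfolding s_def using assms by (intro sgen_range) auto
  have eq: "invs n (w \<circ> s) = insert (r, Suc r) (P ` invs n w)"
  proof (rule Set.set_eqI, rule iffI)
    fix x assume x: "x \<in> invs n (w \<circ> s)"
    obtain i j where ij: "x = (i,j)" by force
    show "x \<in> insert (r, Suc r) (P ` invs n w)"
    proof (cases "x = (r, Suc r)")
      case False
      have "i \<in> {1..n}" "j \<in> {1..n}" "i < j" "w (s j) < w (s i)" using x ij by (auto simp: invs_def)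
      then have "(s i, s j) \<in> invs n w" using mono[of i j] False ij rng by (auto simp: invs_def)
      moreover have "x = P (s i, s j)" using ij by (simp add: P_def ss)
      ultimately show ?thesis by blast
    qed simp
  next
    fix x assume x: "x \<in> insert (r, Suc r) (P ` invs n w)"
    then show "x \<in> invs n (w \<circ> s)"
    proof
      assume "x = (r, Suc r)" then show ?thesis using assms sr
        by (auto simp: invs_def)
    next
      assume "x \<in> P ` invs n w"
      then obtain i j where ij: "(i,j) \<in> invs n w" "x = (s i, s j)" by (auto simp: P_def)
      then have h: "i \<in> {1..n}" "j \<in> {1..n}" "i < j" "w j < w i" by (auto simp: invs_def)
      have "(i,j) \<noteq> (r, Suc r)" using h assms by auto
      then have "s i < s j" using mono h by blast
      then show ?thesis using h ij rng by (auto simp: invs_def ss)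
    qed
  qed
  have notin: "(r, Suc r) \<notin> P ` invs n w"
  proof
    assume "(r, Suc r) \<in> P ` invs n w"
    then obtain i j where ij: "(i,j) \<in> invs n w" "(r, Suc r) = (s i, s j)" by (auto simp: P_def)
    then have "i = Suc r" "j = r" using ss sr by (metis prod.inject)+
    then show False using ij by (auto simp: invs_def)
  qed
  have inj: "inj_on P (invs n w)"
  proof (rule inj_onI)
    fix x y assume "P x = P y"
    then show "x = y" unfolding P_def using ss by (cases x, cases y) (metis prod.inject case_prod_conv)
  qed
  show ?thesis
    unfolding ninv_def s_def[symmetric] eq
    using notin inj by (simp add: card_image)
qed

lemma ninv_step_down:
  assumes "1 \<le> r" "r < n" "w (Suc r) < w r"
  shows "ninv n w = Suc (ninv n (w \<circ> sgen r))"
proof -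
  have "ninv n ((w \<circ> sgen r) \<circ> sgen r) = Suc (ninv n (w \<circ> sgen r))"
    by (rule ninv_step_up) (use assms in \<open>auto simp: sgen_apply\<close>)
  then show ?thesis by (simp add: comp_assoc[symmetric])
qed

lemma ninv_step_le:
  assumes "1 \<le> r" "r < n" "w permutes {1..n}"
  shows "ninv n (w \<circ> sgen r) \<le> Suc (ninv n w)"
proof -
  have "w r \<noteq> w (Suc r)" using assms permutes_inj[OF assms(3)] by (metis injD n_not_Suc_n)
  then show ?thesis using ninv_step_up[OF assms(1,2)] ninv_step_down[OF assms(1,2)]
    by (cases "w r < w (Suc r)") auto
qed

lemma ninv_id[simp]: "ninv n id = 0" "ninv n (\<lambda>x. x) = 0"
proof -
  have "invs n id = {}" "invs n (\<lambda>x. x) = {}" by (auto simp: invs_def)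
  then show "ninv n id = 0" "ninv n (\<lambda>x. x) = 0" by (simp_all add: ninv_def)
qed

lemma ninv_le_length: "is_word n u \<Longrightarrow> ninv n (word_perm u) \<le> length u"
proof (induction u rule: rev_induct)
  case Nil then show ?case by simp
next
  case (snoc r u)
  then have "ninv n (word_perm u \<circ> sgen r) \<le> Suc (ninv n (word_perm u))"
    using word_perm_permutes[of n u] by (intro ninv_step_le) auto
  then have "ninv n (word_perm (u @ [r])) \<le> Suc (ninv n (word_perm u))"
    by (simp only: word_perm_snoc)
  moreover have "ninv n (word_perm u) \<le> length u" using snoc by simp
  ultimately show ?case by simp
qed

lemma mono_perm_id:
  assumes "w permutes {1..n}" "\<forall>r. 1 \<le> r \<and> r < n \<longrightarrow> w r < w (Suc r)"
  shows "w = id"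
proof -
  have inr: "i \<in> {1..n} \<Longrightarrow> w i \<in> {1..n}" for i using permutes_in_image[OF assms(1)] by blast
  have ge: "i \<in> {1..n} \<Longrightarrow> i \<le> w i" for i
  proof (induction i)
    case 0 then show ?case by simp
  next
    case (Suc i)
    show ?case
    proof (cases "i = 0")
      case True then show ?thesis using inr[OF Suc(2)] by simp
    next
      case False
      then have i: "i \<in> {1..n}" "1 \<le> i \<and> i < n" using Suc(2) by auto
      have "w i < w (Suc i)" using assms(2) i(2) by blast
      then show ?thesis using Suc(1)[OF i(1)] by linarith
    qed
  qed
  have le: "k \<le> n - 1 \<Longrightarrow> w (n - k) \<le> n - k" for k
  proof (induction k)
    case 0 then show ?case using inr[of n] assms(1) by (cases "n = 0") (auto simp: permutes_def)
  next
    case (Suc k)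
    then have "w (n - Suc k) < w (Suc (n - Suc k))" using assms(2) by auto
    moreover have "Suc (n - Suc k) = n - k" using Suc by auto
    ultimately show ?case using Suc by auto
  qed
  show ?thesis
  proof (rule ext)
    fix i show "w i = id i"
    proof (cases "i \<in> {1..n}")
      case True
      then have "w (n - (n - i)) \<le> n - (n - i)" by (intro le) auto
      with True ge[of i] show ?thesis by auto
    next
      case False then show ?thesis using assms(1) by (simp add: permutes_def)
    qed
  qed
qed

lemma exists_word_ninv:
  "w permutes {1..n} \<Longrightarrow> \<exists>u. is_word n u \<and> length u = ninv n w \<and> word_perm u = w"
proof (induction "ninv n w" arbitrary: w)
  case 0
  have "w = id"
  proof (rule mono_perm_id[OF 0(2)], intro allI impI)
    fix r assume r: "1 \<le> r \<and> r < n"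
    have "w r \<noteq> w (Suc r)" using permutes_inj[OF 0(2)] by (metis injD n_not_Suc_n)
    moreover have "\<not> w (Suc r) < w r"
      using ninv_step_down[of r n w] r 0(1) by auto
    ultimately show "w r < w (Suc r)" by auto
  qed
  then have "word_perm [] = w" by simp
  then show ?case using 0(1) by (intro exI[of _ "[]"]) auto
next
  case (Suc m)
  have "\<exists>r. 1 \<le> r \<and> r < n \<and> w (Suc r) < w r"
  proof (rule ccontr)
    assume "\<not> ?thesis"
    then have "\<forall>r. 1 \<le> r \<and> r < n \<longrightarrow> w r < w (Suc r)"
      using permutes_inj[OF Suc(3)] by (metis injD n_not_Suc_n linorder_neqE_nat)
    then have "w = id" by (rule mono_perm_id[OF Suc(3)])
    with Suc(2) show False by simp
  qed
  then obtain r where r: "1 \<le> r" "r < n" "w (Suc r) < w r" by blast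
  have "ninv n (w \<circ> sgen r) = m" using ninv_step_down[OF r] Suc(2) by simp
  moreover have "(w \<circ> sgen r) permutes {1..n}"
    using Suc(3) r by (intro permutes_compose sgen_permutes) auto
  ultimately obtain v where v: "is_word n v" "length v = m" "word_perm v = w \<circ> sgen r"
    using Suc(1) by blast
  show ?case
    by (rule exI[of _ "v @ [r]"]) (use v r Suc(2) in \<open>auto simp: word_perm_snoc\<close>)
qed

lemma perm_length_ninv:
  assumes "w permutes {1..n}"
  shows "perm_length n w = ninv n w"
  unfolding perm_length_def
proof (rule Least_equality)
  show "\<exists>u. is_word n u \<and> length u = ninv n w \<and> word_perm u = w"
    using exists_word_ninv[OF assms] .
next
  fix k assume "\<exists>u. is_word n u \<and> length u = k \<and> word_perm u = w"
  then show "ninv n w \<le> k" using ninv_le_length by blast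
qed

lemma reduced_snoc:
  assumes "is_word n (u @ [r])" "length (u @ [r]) = perm_length n (word_perm (u @ [r]))"
  shows "length u = perm_length n (word_perm u)" "word_perm u r < word_perm u (Suc r)"
proof -
  let ?w = "word_perm u"
  have wu: "is_word n u" "1 \<le> r" "r < n" using assms(1) by auto
  have p: "?w permutes {1..n}" using word_perm_permutes[OF wu(1)] .
  have p2: "(?w \<circ> sgen r) permutes {1..n}" using p wu by (intro permutes_compose sgen_permutes) auto
  have L: "ninv n (?w \<circ> sgen r) = Suc (length u)"
    using assms(2) perm_length_ninv[OF p2] by (simp add: word_perm_snoc)
  have le: "ninv n ?w \<le> length u" using ninv_le_length[OF wu(1)] .
  have ne: "?w r \<noteq> ?w (Suc r)" using permutes_inj[OF p] by (metis injD n_not_Suc_n)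
  show "?w r < ?w (Suc r)"
  proof (rule ccontr)
    assume "\<not> ?thesis" with ne have "?w (Suc r) < ?w r" by auto
    from ninv_step_down[OF wu(2,3) this] L le show False by simp
  qed
  then have "ninv n (?w \<circ> sgen r) = Suc (ninv n ?w)" using ninv_step_up wu by blast
  then show "length u = perm_length n ?w" using L perm_length_ninv[OF p] by simp
qed


definition Gm :: "nat \<Rightarrow> nat list \<Rightarrow> (nat \<Rightarrow> real) \<Rightarrow> rmat" where
  "Gm n u t = mat_prod n (map (\<lambda>i. rot n (u ! i) (t i)) [0..<length u])"

lemma Phi_Gm: "Phi n u t = flag_of n (Gm n u t)"
  by (simp add: Phi_def Gm_def)

definition eqr :: "nat \<Rightarrow> rmat \<Rightarrow> rmat \<Rightarrow> bool" where
  "eqr n g h \<longleftrightarrow> (\<forall>i\<in>{1..n}. \<forall>k\<in>{1..n}. g i k = h i k)"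

definition stepf :: "rmat \<Rightarrow> nat \<Rightarrow> real \<Rightarrow> rmat" where
  "stepf g r x = (\<lambda>i k. if k = r then cos x * g i r - sin x * g i (Suc r)
      else if k = Suc r then sin x * g i r + cos x * g i (Suc r) else g i k)"

lemma mat_mul_assoc: "mat_mul n (mat_mul n A B) C = mat_mul n A (mat_mul n B C)"
  unfolding mat_mul_def
  by (rule ext, rule ext) (simp add: sum_distrib_left sum_distrib_right mult.assoc, rule sum.swap)

lemma sum_delta_mult1: "k \<in> S \<Longrightarrow> finite S \<Longrightarrow> (\<Sum>j\<in>S. (f j::real) * (if j = k then 1 else 0)) = f k"
proof -
  assume "k \<in> S" "finite S"
  have "(\<Sum>j\<in>S. (f j::real) * (if j = k then 1 else 0)) = (\<Sum>j\<in>S. if j = k then f k else 0)"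
    by (intro sum.cong) auto
  then show ?thesis using \<open>k \<in> S\<close> \<open>finite S\<close> by simp
qed

lemma sum_delta_mult2: "k \<in> S \<Longrightarrow> finite S \<Longrightarrow> (\<Sum>j\<in>S. (if k = j then 1 else 0) * (f j::real)) = f k"
proof -
  assume "k \<in> S" "finite S"
  have "(\<Sum>j\<in>S. (if k = j then 1 else 0) * (f j::real)) = (\<Sum>j\<in>S. if j = k then f k else 0)"
    by (intro sum.cong) auto
  then show ?thesis using \<open>k \<in> S\<close> \<open>finite S\<close> by simp
qed

lemma mat_mul_id_left: "i \<in> {1..n} \<Longrightarrow> mat_mul n (mat_id n) A i k = A i k"
proof -
  assume i: "i \<in> {1..n}"
  have "mat_mul n (mat_id n) A i k = (\<Sum>j\<in>{1..n}. (if i = j then 1 else 0) * A j k)"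
    unfolding mat_mul_def mat_id_def using i by (intro sum.cong) auto
  also have "\<dots> = A i k" by (rule sum_delta_mult2[OF i]) simp
  finally show ?thesis .
qed

lemma mat_mul_id_right: "k \<in> {1..n} \<Longrightarrow> mat_mul n A (mat_id n) i k = A i k"
proof -
  assume k: "k \<in> {1..n}"
  have "mat_mul n A (mat_id n) i k = (\<Sum>j\<in>{1..n}. A i j * (if j = k then 1 else 0))"
    unfolding mat_mul_def mat_id_def using k by (intro sum.cong) auto
  also have "\<dots> = A i k" by (rule sum_delta_mult1[OF k]) simp
  finally show ?thesis .
qed

lemma mat_mul_eqr_right: "eqr n B B' \<Longrightarrow> k \<in> {1..n} \<Longrightarrow> mat_mul n A B i k = mat_mul n A B' i k"
  unfolding mat_mul_def eqr_def by (intro sum.cong) auto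

lemma mat_prod_append:
  "i \<in> {1..n} \<Longrightarrow> k \<in> {1..n} \<Longrightarrow>
     mat_prod n (As @ Bs) i k = mat_mul n (mat_prod n As) (mat_prod n Bs) i k"
proof (induction As arbitrary: i k)
  case Nil then show ?case by (simp add: mat_mul_id_left)
next
  case (Cons A As)
  have e: "eqr n (mat_prod n (As @ Bs)) (mat_mul n (mat_prod n As) (mat_prod n Bs))"
    using Cons.IH by (simp add: eqr_def)
  have "mat_prod n ((A # As) @ Bs) i k = mat_mul n A (mat_prod n (As @ Bs)) i k" by simp
  also have "\<dots> = mat_mul n A (mat_mul n (mat_prod n As) (mat_prod n Bs)) i k"
    by (rule mat_mul_eqr_right[OF e Cons.prems(2)])
  also have "\<dots> = mat_mul n (mat_prod n (A # As)) (mat_prod n Bs) i k"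
    by (simp add: mat_mul_assoc)
  finally show ?case .
qed

lemma sum_two_points:
  assumes "r \<in> {1..n}" "Suc r \<in> {1..n}"
  shows "(\<Sum>a\<in>{1..n}. (f a::real) * (if a = r then \<alpha> else if a = Suc r then \<beta> else 0)) = f r * \<alpha> + f (Suc r) * \<beta>"
proof -
  have "(\<Sum>a\<in>{1..n}. f a * (if a = r then \<alpha> else if a = Suc r then \<beta> else 0))
      = (\<Sum>a\<in>{1..n}. (if a = r then f r * \<alpha> else 0) + (if a = Suc r then f (Suc r) * \<beta> else 0))"
    by (intro sum.cong) auto
  also have "\<dots> = f r * \<alpha> + f (Suc r) * \<beta>"
    using assms by (simp add: sum.distrib sum.delta)
  finally show ?thesis .
qed

lemma mat_mul_rot:
  assumes "1 \<le> r" "r < n" "i \<in> {1..n}" "k \<in> {1..n}"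
  shows "mat_mul n A (rot n r x) i k = stepf A r x i k"
proof -
  have r: "r \<in> {1..n}" "Suc r \<in> {1..n}" using assms by auto
  consider "k = r" | "k = Suc r" | "k \<noteq> r" "k \<noteq> Suc r" by blast
  then show ?thesis
  proof cases
    case 1
    have "mat_mul n A (rot n r x) i k = (\<Sum>a\<in>{1..n}. A i a * (if a = r then cos x else if a = Suc r then - sin x else 0))"
      unfolding mat_mul_def using 1 by (intro sum.cong) (auto simp: rot_def mat_id_def)
    also have "\<dots> = A i r * cos x + A i (Suc r) * (- sin x)" by (rule sum_two_points[OF r])
    finally show ?thesis using 1 by (simp add: stepf_def algebra_simps)
  next
    case 2
    have "mat_mul n A (rot n r x) i k = (\<Sum>a\<in>{1..n}. A i a * (if a = r then sin x else if a = Suc r then cos x else 0))"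
      unfolding mat_mul_def using 2 by (intro sum.cong) (auto simp: rot_def mat_id_def)
    also have "\<dots> = A i r * sin x + A i (Suc r) * cos x" by (rule sum_two_points[OF r])
    finally show ?thesis using 2 by (simp add: stepf_def algebra_simps)
  next
    case 3
    have "mat_mul n A (rot n r x) i k = (\<Sum>a\<in>{1..n}. A i a * (if a = k then 1 else 0))"
      unfolding mat_mul_def using 3 assms(4) by (intro sum.cong) (auto simp: rot_def mat_id_def)
    then show ?thesis using 3 assms(4) by (simp add: stepf_def sum.delta if_distrib[where f="\<lambda>x. _ * x"] cong: if_cong)
  qed
qed

lemma Gm_Nil: "i \<in> {1..n} \<Longrightarrow> k \<in> {1..n} \<Longrightarrow> Gm n [] t i k = (if i = k then 1 else 0)"
  by (simp add: Gm_def mat_id_def)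

lemma Gm_snoc:
  assumes "1 \<le> r" "r < n" "i \<in> {1..n}" "k \<in> {1..n}"
  shows "Gm n (u @ [r]) t i k = stepf (Gm n u t) r (t (length u)) i k"
proof -
  have m: "map (\<lambda>i. rot n ((u @ [r]) ! i) (t i)) [0..<length (u @ [r])]
      = map (\<lambda>i. rot n (u ! i) (t i)) [0..<length u] @ [rot n r (t (length u))]"
    by (simp add: nth_append)
  have e: "eqr n (mat_prod n [rot n r (t (length u))]) (rot n r (t (length u)))"
    by (simp add: eqr_def mat_mul_id_right)
  have "Gm n (u @ [r]) t i k = mat_mul n (Gm n u t) (mat_prod n [rot n r (t (length u))]) i k"
    unfolding Gm_def m using mat_prod_append assms(3,4) by blast
  also have "\<dots> = mat_mul n (Gm n u t) (rot n r (t (length u))) i k"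
    by (rule mat_mul_eqr_right[OF e assms(4)])
  also have "\<dots> = stepf (Gm n u t) r (t (length u)) i k"
    by (rule mat_mul_rot[OF assms])
  finally show ?thesis .
qed

lemma Gm_snoc_eqr:
  assumes "1 \<le> r" "r < n"
  shows "eqr n (Gm n (u @ [r]) t) (stepf (Gm n u t) r (t (length u)))"
  using Gm_snoc[OF assms] by (simp add: eqr_def)

lemma eqr_trans: "eqr n a b \<Longrightarrow> eqr n b c \<Longrightarrow> eqr n a c"
  by (simp add: eqr_def)

lemma eqr_sym: "eqr n a b \<Longrightarrow> eqr n b a"
  by (simp add: eqr_def)

lemma Gm_cong: "(\<And>i. i < length u \<Longrightarrow> t i = s i) \<Longrightarrow> Gm n u t = Gm n u s"
  unfolding Gm_def by (intro arg_cong[where f="mat_prod n"] map_cong) auto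

lemma stepf_eqr: "eqr n g h \<Longrightarrow> 1 \<le> r \<Longrightarrow> r < n \<Longrightarrow> eqr n (stepf g r x) (stepf h r x)"
  unfolding eqr_def stepf_def by auto

lemma stepf_commute:
  assumes "2 \<le> \<bar>int a - int b\<bar>"
  shows "stepf (stepf g a x) b y = stepf (stepf g b y) a x"
  using assms unfolding stepf_def by (intro ext) auto

definition swp :: "nat \<Rightarrow> (nat \<Rightarrow> real) \<Rightarrow> nat \<Rightarrow> real" where
  "swp m t = t \<circ> Transposition.transpose m (Suc m)"

lemma swp_apply: "swp m t i = (if i = m then t (Suc m) else if i = Suc m then t m else t i)"
  by (simp add: swp_def Transposition.transpose_def)

lemma Gm_commutation:
  assumes "is_word n (p @ [a, b] @ q)" "2 \<le> \<bar>int a - int b\<bar>"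
  shows "eqr n (Gm n (p @ [a, b] @ q) t) (Gm n (p @ [b, a] @ q) (swp (length p) t))"
  using assms(1)
proof (induction q rule: rev_induct)
  case Nil
  have w: "1 \<le> a" "a < n" "1 \<le> b" "b < n" using Nil by auto
  have pab: "p @ [a, b] = (p @ [a]) @ [b]" and pba: "p @ [b, a] = (p @ [b]) @ [a]" by simp_all
  have G: "Gm n p (swp (length p) t) = Gm n p t"
    by (rule Gm_cong) (auto simp: swp_apply)
  have e1: "eqr n (Gm n (p @ [a, b]) t) (stepf (stepf (Gm n p t) a (t (length p))) b (t (Suc (length p))))"
    unfolding pab
    by (rule eqr_trans[OF Gm_snoc_eqr[OF w(3,4)]], simp, rule stepf_eqr[OF Gm_snoc_eqr[OF w(1,2)] w(3,4)])
  have e2: "eqr n (Gm n (p @ [b, a]) (swp (length p) t)) (stepf (stepf (Gm n p t) b (t (Suc (length p)))) a (t (length p)))"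
    unfolding pba
    by (rule eqr_trans[OF Gm_snoc_eqr[OF w(1,2)]], simp add: swp_apply,
        rule stepf_eqr[OF Gm_snoc_eqr[OF w(3,4)] w(1,2), of p "swp (length p) t", unfolded G, simplified swp_apply, simplified])
  show ?case using e1 e2 stepf_commute[OF assms(2)] by (simp add: eqr_def)
next
  case (snoc c q)
  have w: "1 \<le> c" "c < n" using snoc by auto
  have IH: "eqr n (Gm n (p @ [a, b] @ q) t) (Gm n (p @ [b, a] @ q) (swp (length p) t))"
    using snoc by simp
  have l: "swp (length p) t (length (p @ [b, a] @ q)) = t (length (p @ [a, b] @ q))"
    by (simp add: swp_apply)
  show ?case
    unfolding eqr_def
    using Gm_snoc[OF w, of _ _ "p @ [a, b] @ q" t] Gm_snoc[OF w, of _ _ "p @ [b, a] @ q" "swp (length p) t"]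
      stepf_eqr[OF IH w, of "t (length (p @ [a, b] @ q))"] l
    by (simp add: eqr_def)
qed

definition ip :: "nat \<Rightarrow> (nat \<Rightarrow> real) \<Rightarrow> (nat \<Rightarrow> real) \<Rightarrow> real" where
  "ip n x y = (\<Sum>i\<in>{1..n}. x i * y i)"

definition ON :: "nat \<Rightarrow> rmat \<Rightarrow> bool" where
  "ON n g \<longleftrightarrow> (\<forall>j\<in>{1..n}. \<forall>k\<in>{1..n}. ip n (\<lambda>i. g i j) (\<lambda>i. g i k) = (if j = k then 1 else 0))"

lemma ip_lin_left: "ip n (\<lambda>i. a * x i + b * y i) z = a * ip n x z + b * ip n y z"
  by (simp add: ip_def algebra_simps sum.distrib sum_distrib_left)

lemma ip_lin_right: "ip n z (\<lambda>i. a * x i + b * y i) = a * ip n z x + b * ip n z y"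
  by (simp add: ip_def algebra_simps sum.distrib sum_distrib_left)

lemma ip_lin_left_minus: "ip n (\<lambda>i. a * x i - b * y i) z = a * ip n x z - b * ip n y z"
  by (simp add: ip_def algebra_simps sum_subtractf sum_distrib_left)

lemma ip_lin_right_minus: "ip n z (\<lambda>i. a * x i - b * y i) = a * ip n z x - b * ip n z y"
  by (simp add: ip_def algebra_simps sum_subtractf sum_distrib_left)

lemma ip_cong: "(\<And>i. i \<in> {1..n} \<Longrightarrow> x i = x' i) \<Longrightarrow> (\<And>i. i \<in> {1..n} \<Longrightarrow> y i = y' i) \<Longrightarrow> ip n x y = ip n x' y'"
  unfolding ip_def by (intro sum.cong) auto

lemma ON_stepf:
  assumes "ON n g" "1 \<le> r" "r < n" "eqr n h (stepf g r x)"
  shows "ON n h"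
  unfolding ON_def
proof (intro ballI)
  fix j k assume jk: "j \<in> {1..n}" "k \<in> {1..n}"
  have r: "r \<in> {1..n}" "Suc r \<in> {1..n}" using assms by auto
  let ?c = "\<lambda>m i. g i m"
  have col: "(\<lambda>i. h i m) = (\<lambda>i. h i m)" for m ..
  have colh: "ip n (\<lambda>i. h i j) (\<lambda>i. h i k) = ip n (\<lambda>i. stepf g r x i j) (\<lambda>i. stepf g r x i k)"
    using assms(4) jk by (intro ip_cong) (auto simp: eqr_def)
  have on: "a \<in> {1..n} \<Longrightarrow> b \<in> {1..n} \<Longrightarrow> ip n (?c a) (?c b) = (if a = b then 1 else 0)" for a b
    using assms(1) by (simp add: ON_def)
  have sf: "(\<lambda>i. stepf g r x i m) = (if m = r then (\<lambda>i. cos x * g i r + (- sin x) * g i (Suc r))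
      else if m = Suc r then (\<lambda>i. sin x * g i r + cos x * g i (Suc r)) else ?c m)" for m
    by (auto simp: stepf_def)
  have "ip n (\<lambda>i. stepf g r x i j) (\<lambda>i. stepf g r x i k) = (if j = k then 1 else 0)"
    unfolding sf
    using jk r
    by (auto simp: ip_lin_left ip_lin_right ip_lin_left_minus ip_lin_right_minus on algebra_simps sin_squared_eq)
  then show "ip n (\<lambda>i. h i j) (\<lambda>i. h i k) = (if j = k then 1 else 0)" using colh by simp
qed

lemma ON_Gm: "is_word n u \<Longrightarrow> ON n (Gm n u t)"
proof (induction u rule: rev_induct)
  case Nil then show ?case
    by (auto simp: ON_def ip_def Gm_Nil if_distrib[where f="\<lambda>x. x * _"] sum.delta cong: if_cong)
next
  case (snoc r u)
  have w: "1 \<le> r" "r < n" using snoc by auto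
  show ?case
    by (rule ON_stepf[OF _ w]) (use snoc Gm_snoc[OF w] in \<open>auto simp: eqr_def\<close>)
qed


definition inS :: "nat \<Rightarrow> (nat \<Rightarrow> nat \<Rightarrow> real) \<Rightarrow> nat \<Rightarrow> (nat \<Rightarrow> real) \<Rightarrow> bool" where
  "inS n h k x \<longleftrightarrow> (\<exists>c. \<forall>i\<in>{1..n}. x i = (\<Sum>m\<in>{1..k}. c m * h m i))"

definition cols :: "rmat \<Rightarrow> nat \<Rightarrow> nat \<Rightarrow> real" where
  "cols g = (\<lambda>m i. g i m)"

lemma inS_zero: "inS n h k (\<lambda>i. 0)"
  unfolding inS_def by (rule exI[of _ "\<lambda>_. 0"]) simp

lemma inS_lin:
  assumes "inS n h k x" "inS n h k y"
  shows "inS n h k (\<lambda>i. a * x i + b * y i)"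
proof -
  obtain c where c: "\<forall>i\<in>{1..n}. x i = (\<Sum>m\<in>{1..k}. c m * h m i)" using assms(1) inS_def by blast
  obtain d where d: "\<forall>i\<in>{1..n}. y i = (\<Sum>m\<in>{1..k}. d m * h m i)" using assms(2) inS_def by blast
  show ?thesis unfolding inS_def
    by (rule exI[of _ "\<lambda>m. a * c m + b * d m"])
       (simp add: c d sum_distrib_left sum.distrib algebra_simps)
qed

lemma inS_cong: "(\<And>i. i \<in> {1..n} \<Longrightarrow> x i = y i) \<Longrightarrow> inS n h k x \<longleftrightarrow> inS n h k y"
  unfolding inS_def by auto

lemma inS_vec: "j \<in> {1..k} \<Longrightarrow> inS n h k (h j)"
  unfolding inS_def
  by (rule exI[of _ "\<lambda>m. if m = j then 1 else 0"]) (simp add: if_distrib[where f="\<lambda>x. x * _"] sum.delta cong: if_cong)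

lemma inS_mono:
  assumes "k \<le> k'" "inS n h k x"
  shows "inS n h k' x"
proof -
  obtain c where c: "\<forall>i\<in>{1..n}. x i = (\<Sum>m\<in>{1..k}. c m * h m i)" using assms(2) inS_def by blast
  have "(\<Sum>m\<in>{1..k'}. (if m \<le> k then c m else 0) * h m i) = (\<Sum>m\<in>{1..k}. c m * h m i)" for i
    by (rule sum.mono_neutral_cong_right) (use assms(1) in auto)
  then show ?thesis unfolding inS_def using c by (intro exI[of _ "\<lambda>m. if m \<le> k then c m else 0"]) auto
qed

lemma inS_trans:
  assumes "\<And>j. j \<in> {1..k} \<Longrightarrow> inS n h k' (f j)" "inS n f k x"
  shows "inS n h k' x"
proof -
  obtain c where c: "\<forall>i\<in>{1..n}. x i = (\<Sum>j\<in>{1..k}. c j * f j i)" using assms(2) inS_def by blast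
  have "\<forall>j\<in>{1..k}. \<exists>d. \<forall>i\<in>{1..n}. f j i = (\<Sum>m\<in>{1..k'}. d m * h m i)"
    using assms(1) by (auto simp: inS_def)
  then obtain D where D: "\<And>j i. j \<in> {1..k} \<Longrightarrow> i \<in> {1..n} \<Longrightarrow> f j i = (\<Sum>m\<in>{1..k'}. D j m * h m i)"
    by metis
  show ?thesis unfolding inS_def
  proof (intro exI[of _ "\<lambda>m. \<Sum>j\<in>{1..k}. c j * D j m"] ballI)
    fix i assume i: "i \<in> {1..n}"
    have "x i = (\<Sum>j\<in>{1..k}. c j * (\<Sum>m\<in>{1..k'}. D j m * h m i))"
      using c i D by (auto intro!: sum.cong)
    also have "\<dots> = (\<Sum>m\<in>{1..k'}. (\<Sum>j\<in>{1..k}. c j * D j m) * h m i)"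
      by (simp add: sum_distrib_left sum_distrib_right mult.assoc, rule sum.swap)
    finally show "x i = (\<Sum>m\<in>{1..k'}. (\<Sum>j\<in>{1..k}. c j * D j m) * h m i)" .
  qed
qed

lemma inS_0: "inS n h 0 x \<longleftrightarrow> (\<forall>i\<in>{1..n}. x i = 0)"
  unfolding inS_def by simp

lemma inS_Suc:
  "inS n h (Suc k) x \<longleftrightarrow> (\<exists>y a. inS n h k y \<and> (\<forall>i\<in>{1..n}. x i = y i + a * h (Suc k) i))"
proof
  assume "inS n h (Suc k) x"
  then obtain c where c: "\<forall>i\<in>{1..n}. x i = (\<Sum>m\<in>{1..Suc k}. c m * h m i)" using inS_def by blast
  have "inS n h k (\<lambda>i. \<Sum>m\<in>{1..k}. c m * h m i)" unfolding inS_def by blast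
  moreover have "\<forall>i\<in>{1..n}. x i = (\<Sum>m\<in>{1..k}. c m * h m i) + c (Suc k) * h (Suc k) i"
    using c by simp
  ultimately show "\<exists>y a. inS n h k y \<and> (\<forall>i\<in>{1..n}. x i = y i + a * h (Suc k) i)" by blast
next
  assume "\<exists>y a. inS n h k y \<and> (\<forall>i\<in>{1..n}. x i = y i + a * h (Suc k) i)"
  then obtain y a where y: "inS n h k y" "\<forall>i\<in>{1..n}. x i = y i + a * h (Suc k) i" by blast
  obtain c where c: "\<forall>i\<in>{1..n}. y i = (\<Sum>m\<in>{1..k}. c m * h m i)" using y(1) inS_def by blast
  have "\<forall>i\<in>{1..n}. x i = (\<Sum>m\<in>{1..Suc k}. (if m = Suc k then a else c m) * h m i)"
    using y(2) c by simp
  then show "inS n h (Suc k) x" unfolding inS_def by (rule exI[of _ "\<lambda>m. if m = Suc k then a else c m"])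
qed

lemma inS_fam_cong:
  "(\<And>m i. m \<in> {1..k} \<Longrightarrow> i \<in> {1..n} \<Longrightarrow> h m i = h' m i) \<Longrightarrow> inS n h k x \<longleftrightarrow> inS n h' k x"
proof -
  assume a: "\<And>m i. m \<in> {1..k} \<Longrightarrow> i \<in> {1..n} \<Longrightarrow> h m i = h' m i"
  have "(\<Sum>m\<in>{1..k}. c m * h m i) = (\<Sum>m\<in>{1..k}. c m * h' m i)" if "i \<in> {1..n}" for c i
    using a that by (intro sum.cong) auto
  then show ?thesis unfolding inS_def by auto
qed

lemma inS_eqI:
  assumes "\<And>j. j \<in> {1..k} \<Longrightarrow> inS n h k (f j)" "\<And>j. j \<in> {1..k} \<Longrightarrow> inS n f k (h j)"
  shows "inS n f k = inS n h k"
proof (intro ext iffI)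
  fix x assume "inS n f k x" then show "inS n h k x" by (rule inS_trans[rotated]) (rule assms(1))
next
  fix x assume "inS n h k x" then show "inS n f k x" by (rule inS_trans[rotated]) (rule assms(2))
qed


lemma flag_of_inS:
  assumes "k \<in> {1..n}"
  shows "flag_of n g k = {x. inS n (cols g) k x \<and> (\<forall>i. i \<notin> {1..n} \<longrightarrow> x i = 0)}"
proof (rule Set.set_eqI, rule iffI)
  fix x assume "x \<in> flag_of n g k"
  then obtain c where c: "x = (\<lambda>i. if i \<in> {1..n} then \<Sum>j\<in>{1..k}. c j * g i j else 0)"
    using assms by (auto simp: flag_of_def)
  then show "x \<in> {x. inS n (cols g) k x \<and> (\<forall>i. i \<notin> {1..n} \<longrightarrow> x i = 0)}"
    by (auto simp: inS_def cols_def)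
next
  fix x assume "x \<in> {x. inS n (cols g) k x \<and> (\<forall>i. i \<notin> {1..n} \<longrightarrow> x i = 0)}"
  then obtain c where c: "\<forall>i\<in>{1..n}. x i = (\<Sum>j\<in>{1..k}. c j * g i j)" "\<forall>i. i \<notin> {1..n} \<longrightarrow> x i = 0"
    by (auto simp: inS_def cols_def)
  then have "x = (\<lambda>i. if i \<in> {1..n} then \<Sum>j\<in>{1..k}. c j * g i j else 0)"
    by (intro ext) auto
  then show "x \<in> flag_of n g k" using assms by (auto simp: flag_of_def)
qed

lemma flag_eq_inS:
  assumes "flag_of n g k = flag_of n h k" "k \<in> {1..n}"
  shows "inS n (cols g) k = inS n (cols h) k"
proof (intro ext)
  fix x :: "nat \<Rightarrow> real"
  define x' where "x' = (\<lambda>i. if i \<in> {1..n} then x i else 0)"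
  have "inS n (cols g) k x \<longleftrightarrow> inS n (cols g) k x'" by (rule inS_cong) (simp add: x'_def)
  also have "\<dots> \<longleftrightarrow> x' \<in> flag_of n g k" using flag_of_inS[OF assms(2)] by (auto simp: x'_def)
  also have "\<dots> \<longleftrightarrow> x' \<in> flag_of n h k" using assms(1) by simp
  also have "\<dots> \<longleftrightarrow> inS n (cols h) k x'" using flag_of_inS[OF assms(2)] by (auto simp: x'_def)
  also have "\<dots> \<longleftrightarrow> inS n (cols h) k x" by (rule inS_cong) (simp add: x'_def)
  finally show "inS n (cols g) k x = inS n (cols h) k x" .
qed

lemma Collect_ex_cong: "(\<And>c. A c = B c) \<Longrightarrow> {v. \<exists>c. v = A c} = {v. \<exists>c. v = B c}"
  by auto

lemma inS_cong': "inS n h k y \<Longrightarrow> (\<And>i. i \<in> {1..n} \<Longrightarrow> x i = y i) \<Longrightarrow> inS n h k x"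
  using inS_cong by blast

lemma flag_eqr: "eqr n g h \<Longrightarrow> flag_of n g = flag_of n h"
proof (rule ext)
  fix k assume e: "eqr n g h"
  show "flag_of n g k = flag_of n h k"
  proof (cases "k \<in> {1..n}")
    case True
    have "(\<Sum>j\<in>{1..k}. c j * g i j) = (\<Sum>j\<in>{1..k}. c j * h i j)" if "i \<in> {1..n}" for c i
      using e True that by (intro sum.cong) (auto simp: eqr_def)
    note eq = this
    have eqf: "(\<lambda>i. if i \<in> {1..n} then \<Sum>j\<in>{1..k}. c j * g i j else 0) = (\<lambda>i. if i \<in> {1..n} then \<Sum>j\<in>{1..k}. c j * h i j else 0)" for c
      using eq by (intro ext) auto
    show ?thesis unfolding flag_of_def if_P[OF True] by (rule Collect_ex_cong) (rule eqf)
  next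
    case False show ?thesis unfolding flag_of_def if_not_P[OF False] by (rule refl)
  qed
qed

lemma ip_comb:
  assumes "\<forall>i\<in>{1..n}. x i = (\<Sum>m\<in>S. c m * h m i)" "finite S"
  shows "ip n x z = (\<Sum>m\<in>S. c m * ip n (h m) z)"
proof -
  have "ip n x z = (\<Sum>i\<in>{1..n}. (\<Sum>m\<in>S. c m * h m i) * z i)"
    unfolding ip_def using assms by (intro sum.cong) auto
  also have "\<dots> = (\<Sum>m\<in>S. c m * ip n (h m) z)"
    unfolding ip_def by (simp add: sum_distrib_right sum_distrib_left mult.assoc, rule sum.swap)
  finally show ?thesis .
qed

lemma ip_inS_zero:
  assumes "inS n (cols g) k x" "ON n g" "j \<in> {1..n}" "k < j" "k \<le> n"
  shows "ip n x (cols g j) = 0"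
proof -
  obtain c where c: "\<forall>i\<in>{1..n}. x i = (\<Sum>m\<in>{1..k}. c m * cols g m i)" using assms(1) inS_def by blast
  have "ip n x (cols g j) = (\<Sum>m\<in>{1..k}. c m * ip n (cols g m) (cols g j))"
    by (rule ip_comb[OF c]) simp
  also have "\<dots> = 0"
    using assms by (intro sum.neutral) (auto simp: ON_def cols_def)
  finally show ?thesis .
qed

lemma not_inS_ON:
  assumes "ON n g" "j \<in> {1..n}" "k < j"
  shows "\<not> inS n (cols g) k (cols g j)"
proof
  assume "inS n (cols g) k (cols g j)"
  then have "ip n (cols g j) (cols g j) = 0" using ip_inS_zero assms by auto
  moreover have "ip n (cols g j) (cols g j) = 1" using assms by (auto simp: ON_def cols_def)
  ultimately show False by simp
qed

definition Piv :: "nat \<Rightarrow> (nat \<Rightarrow> nat) \<Rightarrow> (nat \<Rightarrow> nat \<Rightarrow> real) \<Rightarrow> bool" where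
  "Piv n w f \<longleftrightarrow> (\<forall>k\<in>{1..n}. f k (w k) = 1 \<and> (\<forall>i. w k < i \<longrightarrow> f k i = 0))"

lemma top_coeff_zero:
  fixes w :: "nat \<Rightarrow> nat" and B :: nat and f :: "nat \<Rightarrow> nat \<Rightarrow> real" and c :: "nat \<Rightarrow> real"
  assumes S: "finite S" "S \<subseteq> {1..n}" and w: "inj_on w S" "\<And>m. m \<in> S \<Longrightarrow> w m \<in> {1..n}"
    and P: "\<And>m. m \<in> S \<Longrightarrow> f m (w m) = 1" "\<And>m i. m \<in> S \<Longrightarrow> w m < i \<Longrightarrow> f m i = 0"
    and y: "\<forall>i\<in>{1..n}. y i = (\<Sum>m\<in>S. c m * f m i)" "\<And>i. i \<in> {1..n} \<Longrightarrow> B < i \<Longrightarrow> y i = 0"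
    and m: "m \<in> S" "B < w m"
  shows "c m = 0"
proof (rule ccontr)
  assume cm: "c m \<noteq> 0"
  define M where "M = {m\<in>S. B < w m \<and> c m \<noteq> 0}"
  have M: "finite M" "M \<noteq> {}" using S m cm by (auto simp: M_def)
  have "Max (w ` M) \<in> w ` M" using M by (intro Max_in) auto
  then obtain m0 where m0: "m0 \<in> M" "w m0 = Max (w ` M)" by auto
  have m0S: "m0 \<in> S" "B < w m0" "c m0 \<noteq> 0" using m0 by (auto simp: M_def)
  have le: "m' \<in> M \<Longrightarrow> w m' \<le> w m0" for m' using m0 M by auto
  have "y (w m0) = (\<Sum>m'\<in>S. c m' * f m' (w m0))" using y(1) w(2)[OF m0S(1)] by auto
  also have "\<dots> = (\<Sum>m'\<in>S. if m' = m0 then c m0 else 0)"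
  proof (rule sum.cong)
    fix m' assume m': "m' \<in> S"
    show "c m' * f m' (w m0) = (if m' = m0 then c m0 else 0)"
    proof (cases "m' = m0")
      case True then show ?thesis using P(1)[OF m0S(1)] by simp
    next
      case False
      have "c m' = 0 \<or> w m' < w m0"
      proof (cases "c m' = 0")
        case False
        show ?thesis
        proof (cases "B < w m'")
          case True
          then have "m' \<in> M" using m' False by (auto simp: M_def)
          then have "w m' \<le> w m0" by (rule le)
          moreover have "w m' \<noteq> w m0" using w(1) m' m0S(1) \<open>m' \<noteq> m0\<close> by (auto dest: inj_onD)
          ultimately show ?thesis by simp
        next
          case False then show ?thesis using m0S by simp
        qed
      qed simp
      then show ?thesis using P(2)[OF m'] False by auto
    qed
  qed simp
  also have "\<dots> = c m0" using m0S(1) S(1) by simp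
  finally have "y (w m0) = c m0" .
  moreover have "y (w m0) = 0" using y(2) w(2)[OF m0S(1)] m0S(2) by auto
  ultimately show False using m0S(3) by simp
qed

lemma piv_char:
  assumes P: "Piv n w f" and w: "w permutes {1..n}" and r: "1 \<le> r" "r < n" "w r < w (Suc r)"
  shows "inS n f r z \<longleftrightarrow> (\<exists>x y. inS n f (r - 1) x \<and> inS n f (Suc r) y \<and>
            (\<forall>i\<in>{1..n}. w r < i \<longrightarrow> y i = 0) \<and> (\<forall>i\<in>{1..n}. z i = x i + y i))"
proof
  assume "inS n f r z"
  then have "inS n f (Suc (r - 1)) z" using r by simp
  then obtain x a where xa: "inS n f (r - 1) x" "\<forall>i\<in>{1..n}. z i = x i + a * f (Suc (r - 1)) i"
    unfolding inS_Suc by blast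
  have rr: "Suc (r - 1) = r" using r by simp
  have "inS n f (Suc r) (\<lambda>i. a * f r i + 0 * f r i)"
    by (intro inS_lin inS_vec) (use r in auto)
  moreover have "\<forall>i\<in>{1..n}. w r < i \<longrightarrow> a * f r i + 0 * f r i = 0"
    using P r by (auto simp: Piv_def)
  ultimately show "\<exists>x y. inS n f (r - 1) x \<and> inS n f (Suc r) y \<and>
            (\<forall>i\<in>{1..n}. w r < i \<longrightarrow> y i = 0) \<and> (\<forall>i\<in>{1..n}. z i = x i + y i)"
    using xa rr by (intro exI[of _ x] exI[of _ "\<lambda>i. a * f r i + 0 * f r i"]) auto
next
  assume "\<exists>x y. inS n f (r - 1) x \<and> inS n f (Suc r) y \<and>
            (\<forall>i\<in>{1..n}. w r < i \<longrightarrow> y i = 0) \<and> (\<forall>i\<in>{1..n}. z i = x i + y i)"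
  then obtain x y where xy: "inS n f (r - 1) x" "inS n f (Suc r) y"
    "\<forall>i\<in>{1..n}. w r < i \<longrightarrow> y i = 0" "\<forall>i\<in>{1..n}. z i = x i + y i" by blast
  obtain c where c: "\<forall>i\<in>{1..n}. y i = (\<Sum>m\<in>{1..Suc r}. c m * f m i)" using xy(2) inS_def by blast
  have inj: "inj_on w {1..Suc r}" using permutes_inj[OF w] by (auto intro: inj_on_subset)
  have c0: "c (Suc r) = 0"
  proof (rule top_coeff_zero[where S="{1..Suc r}" and w=w and f=f and y=y and B="w r" and n=n])
    show "\<And>m. m \<in> {1..Suc r} \<Longrightarrow> w m \<in> {1..n}" using permutes_in_image[OF w] r by auto
    show "\<And>m. m \<in> {1..Suc r} \<Longrightarrow> f m (w m) = 1" using P r by (auto simp: Piv_def)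
    show "\<And>m i. m \<in> {1..Suc r} \<Longrightarrow> w m < i \<Longrightarrow> f m i = 0" using P r by (auto simp: Piv_def)
  qed (use r inj c xy(3) in auto)
  have "\<forall>i\<in>{1..n}. y i = (\<Sum>m\<in>{1..r}. c m * f m i)" using c c0 by simp
  then have "inS n f r y" unfolding inS_def by blast
  moreover have "inS n f r x" using xy(1) by (rule inS_mono[rotated]) simp
  ultimately have "inS n f r (\<lambda>i. 1 * x i + 1 * y i)" by (intro inS_lin)
  then show "inS n f r z" using xy(4) by (subst inS_cong) auto
qed

lemma rot_inv1: "cos x * (cos x * a - sin x * b) + sin x * (sin x * a + cos x * b) = (a::real)"
proof -
  have h: "cos x * cos x + sin x * sin x = 1" by (rule sin_cos_squared_add3)
  have "cos x * (cos x * a - sin x * b) + sin x * (sin x * a + cos x * b) = a * (cos x * cos x) + a * (sin x * sin x)"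
    by (simp add: algebra_simps)
  also have "\<dots> = a" by (metis distrib_left h mult_1_right)
  finally show ?thesis .
qed

lemma rot_inv2: "(- sin x) * (cos x * a - sin x * b) + cos x * (sin x * a + cos x * b) = (b::real)"
proof -
  have h: "cos x * cos x + sin x * sin x = 1" by (rule sin_cos_squared_add3)
  have "(- sin x) * (cos x * a - sin x * b) + cos x * (sin x * a + cos x * b) = b * (cos x * cos x) + b * (sin x * sin x)"
    by (simp add: algebra_simps)
  also have "\<dots> = b" by (metis distrib_left h mult_1_right)
  finally show ?thesis .
qed

lemma rot_span:
  assumes e: "eqr n g' (stepf g r x)" and r: "1 \<le> r" "r < n" and k: "k \<in> {1..n}" "k \<noteq> r"
  shows "inS n (cols g') k = inS n (cols g) k"
proof (cases "k < r")
  case True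
  show ?thesis
    by (intro ext inS_fam_cong) (use e True k in \<open>auto simp: eqr_def stepf_def cols_def\<close>)
next
  case False
  then have kr: "Suc r \<le> k" using k by auto
  have c1: "cols g' r i = cos x * cols g r i + (- sin x) * cols g (Suc r) i" if "i \<in> {1..n}" for i
    using e that r by (auto simp: eqr_def stepf_def cols_def)
  have c2: "cols g' (Suc r) i = sin x * cols g r i + cos x * cols g (Suc r) i" if "i \<in> {1..n}" for i
    using e that r by (auto simp: eqr_def stepf_def cols_def)
  have c3: "cols g' m i = cols g m i" if "i \<in> {1..n}" "m \<in> {1..n}" "m \<noteq> r" "m \<noteq> Suc r" for i m
    using e that by (auto simp: eqr_def stepf_def cols_def)
  have d1: "cols g r i = cos x * cols g' r i + sin x * cols g' (Suc r) i" if "i \<in> {1..n}" for i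
    using c1[OF that] c2[OF that]
    using rot_inv1[of x "cols g r i" "cols g (Suc r) i"] rot_inv2[of x "cols g r i" "cols g (Suc r) i"] by simp
  have d2: "cols g (Suc r) i = (- sin x) * cols g' r i + cos x * cols g' (Suc r) i" if "i \<in> {1..n}" for i
    using c1[OF that] c2[OF that]
    using rot_inv1[of x "cols g r i" "cols g (Suc r) i"] rot_inv2[of x "cols g r i" "cols g (Suc r) i"] by simp
  have vr: "r \<in> {1..k}" "Suc r \<in> {1..k}" using r kr by auto
  show ?thesis
  proof (rule inS_eqI)
    fix j assume j: "j \<in> {1..k}"
    show "inS n (cols g) k (cols g' j)"
    proof -
      consider "j = r" | "j = Suc r" | "j \<noteq> r" "j \<noteq> Suc r" by blast
      then show ?thesis
      proof cases
        case 1 show ?thesis unfolding 1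
          by (rule inS_cong'[OF _ c1]) (intro inS_lin inS_vec vr)
      next
        case 2 show ?thesis unfolding 2
          by (rule inS_cong'[OF _ c2]) (intro inS_lin inS_vec vr)
      next
        case 3 then show ?thesis
          using c3 j k by (subst inS_cong[where y="cols g j"]) (auto intro!: inS_vec)
      qed
    qed
  next
    fix j assume j: "j \<in> {1..k}"
    show "inS n (cols g') k (cols g j)"
    proof -
      consider "j = r" | "j = Suc r" | "j \<noteq> r" "j \<noteq> Suc r" by blast
      then show ?thesis
      proof cases
        case 1 show ?thesis unfolding 1
          by (rule inS_cong'[OF _ d1]) (intro inS_lin inS_vec vr)
      next
        case 2 show ?thesis unfolding 2
          by (rule inS_cong'[OF _ d2]) (intro inS_lin inS_vec vr)
      next
        case 3 then show ?thesis
          using c3 j k by (subst inS_cong[where y="cols g' j"]) (auto intro!: inS_vec)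
      qed
    qed
  qed
qed


definition Cell :: "nat \<Rightarrow> (nat \<Rightarrow> nat) \<Rightarrow> rmat \<Rightarrow> bool" where
  "Cell n w g \<longleftrightarrow> (\<exists>f. Piv n w f \<and> (\<forall>k\<in>{1..n}. inS n f k = inS n (cols g) k))"

lemma inS_0_eq: "inS n f 0 = inS n h 0"
  by (intro ext) (simp add: inS_0)

lemma Cell_all:
  assumes "Cell n w g"
  obtains f where "Piv n w f" "\<And>k. k \<le> n \<Longrightarrow> inS n f k = inS n (cols g) k"
proof -
  obtain f where f: "Piv n w f" "\<forall>k\<in>{1..n}. inS n f k = inS n (cols g) k" using assms Cell_def by blast
  have "k \<le> n \<Longrightarrow> inS n f k = inS n (cols g) k" for k
    using f(2) inS_0_eq[of n f "cols g"] by (cases "k = 0") auto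
  then show ?thesis using that f(1) by blast
qed

lemma inS_lin': "inS n h k x \<Longrightarrow> inS n h k y \<Longrightarrow> (\<And>i. i \<in> {1..n} \<Longrightarrow> z i = a * x i + b * y i) \<Longrightarrow> inS n h k z"
  using inS_cong'[OF inS_lin] by blast

lemma Cell_Gm:
  assumes "is_word n u" "length u = perm_length n (word_perm u)" "\<forall>i<length u. 0 < t i \<and> t i < pi"
  shows "Cell n (word_perm u) (Gm n u t)"
  using assms
proof (induction u rule: rev_induct)
  case Nil
  define f :: "nat \<Rightarrow> nat \<Rightarrow> real" where "f = (\<lambda>k i. if i = k then 1 else 0)"
  have "Piv n (word_perm []) f" by (simp add: Piv_def f_def)
  moreover have "inS n f k = inS n (cols (Gm n [] t)) k" if "k \<in> {1..n}" for k
    by (intro ext inS_fam_cong) (use that in \<open>auto simp: f_def cols_def Gm_Nil\<close>)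
  ultimately show ?case unfolding Cell_def by blast
next
  case (snoc r u)
  have r: "1 \<le> r" "r < n" and wu: "is_word n u" using snoc.prems(1) by auto
  note red = reduced_snoc[OF snoc.prems(1,2)]
  define w where "w = word_perm u"
  have wrr: "w r < w (Suc r)" using red(2) by (simp add: w_def)
  have wp: "w permutes {1..n}" using word_perm_permutes[OF wu] by (simp add: w_def)
  have tu: "\<forall>i<length u. 0 < t i \<and> t i < pi" using snoc.prems(3) by auto
  have "Cell n w (Gm n u t)" using snoc.IH[OF wu red(1) tu] by (simp add: w_def)
  then obtain f2 where P2: "Piv n w f2" and L: "\<And>k. k \<le> n \<Longrightarrow> inS n f2 k = inS n (cols (Gm n u t)) k"
    by (rule Cell_all) blast
  define g2 where "g2 = Gm n u t"
  define g where "g = Gm n (u @ [r]) t"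
  define \<theta> where "\<theta> = t (length u)"
  have th: "0 < \<theta>" "\<theta> < pi" using snoc.prems(3) by (auto simp: \<theta>_def)
  have sth: "sin \<theta> > 0" using sin_gt_zero th by blast
  have e: "eqr n g (stepf g2 r \<theta>)" unfolding g_def g2_def \<theta>_def by (rule Gm_snoc_eqr[OF r])
  have ON2: "ON n g2" unfolding g2_def by (rule ON_Gm[OF wu])
  have L2: "\<And>k. k \<le> n \<Longrightarrow> inS n f2 k = inS n (cols g2) k" using L by (simp add: g2_def)
  have cg_r: "cols g r i = cos \<theta> * cols g2 r i - sin \<theta> * cols g2 (Suc r) i" if "i \<in> {1..n}" for i
    using e that r by (auto simp: eqr_def stepf_def cols_def)
  have cg_o: "cols g m i = cols g2 m i" if "i \<in> {1..n}" "m \<in> {1..n}" "m \<noteq> r" "m \<noteq> Suc r" for i m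
    using e that by (auto simp: eqr_def stepf_def cols_def)
  have "inS n f2 (Suc r) (cols g2 (Suc r))"
    using L2[of "Suc r"] r inS_vec[of "Suc r" "Suc r" n "cols g2"] by auto
  then obtain y1 \<gamma> where y1: "inS n f2 r y1" "\<forall>i\<in>{1..n}. cols g2 (Suc r) i = y1 i + \<gamma> * f2 (Suc r) i"
    unfolding inS_Suc by blast
  have g0: "\<gamma> \<noteq> 0"
  proof
    assume "\<gamma> = 0"
    then have "inS n f2 r (cols g2 (Suc r))" using y1 by (subst inS_cong[where y=y1]) auto
    then have "inS n (cols g2) r (cols g2 (Suc r))" using L2[of r] r by simp
    then show False using not_inS_ON[OF ON2, of "Suc r" r] r by auto
  qed
  have cr2: "inS n f2 r (cols g2 r)" using L2[of r] r inS_vec[of r r n "cols g2"] by auto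
  define z where "z = (\<lambda>i. cos \<theta> * cols g2 r i + (- sin \<theta>) * y1 i)"
  have "inS n f2 r z" unfolding z_def by (rule inS_lin[OF cr2 y1(1)])
  then have "inS n f2 (Suc (r - 1)) z" using r by simp
  then obtain z0 \<beta> where z0: "inS n f2 (r - 1) z0" "\<forall>i\<in>{1..n}. z i = z0 i + \<beta> * f2 (Suc (r - 1)) i"
    unfolding inS_Suc by blast
  have rr: "Suc (r - 1) = r" using r by simp
  define \<kappa> where "\<kappa> = - sin \<theta> * \<gamma>"
  have k0: "\<kappa> \<noteq> 0" using g0 sth by (simp add: \<kappa>_def)
  define fr where "fr = (\<lambda>i. f2 (Suc r) i + (\<beta> / \<kappa>) * f2 r i)"
  have v: "cols g r i = z0 i + \<kappa> * fr i" if "i \<in> {1..n}" for i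
  proof -
    have "cols g r i = z i - sin \<theta> * \<gamma> * f2 (Suc r) i"
      using cg_r[OF that] y1(2) that by (simp add: z_def algebra_simps)
    also have "\<dots> = z0 i + \<beta> * f2 r i + \<kappa> * f2 (Suc r) i" using z0(2) that rr by (simp add: \<kappa>_def)
    also have "\<dots> = z0 i + \<kappa> * fr i" using k0 by (simp add: fr_def algebra_simps)
    finally show ?thesis .
  qed
  define f where "f = (\<lambda>k. if k = r then fr else if k = Suc r then f2 r else f2 k)"
  have Pnew: "Piv n (w \<circ> sgen r) f"
    unfolding Piv_def
  proof (intro ballI conjI allI impI)
    fix k assume k: "k \<in> {1..n}"
    have Pr: "f2 r (w r) = 1" "\<And>i. w r < i \<Longrightarrow> f2 r i = 0" using P2 r by (auto simp: Piv_def)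
    have Pr1: "f2 (Suc r) (w (Suc r)) = 1" "\<And>i. w (Suc r) < i \<Longrightarrow> f2 (Suc r) i = 0" using P2 r by (auto simp: Piv_def)
    have Pk: "f2 k (w k) = 1" "\<And>i. w k < i \<Longrightarrow> f2 k i = 0" using P2 k by (auto simp: Piv_def)
    show "f k ((w \<circ> sgen r) k) = 1"
      using Pr Pr1 Pk wrr by (auto simp: f_def fr_def sgen_apply)
    fix i assume "(w \<circ> sgen r) k < i"
    then show "f k i = 0"
      using Pr Pr1 Pk wrr by (auto simp: f_def fr_def sgen_apply split: if_splits)
  qed
  have fam_lt: "inS n f k = inS n f2 k" if "k < r" for k
    by (intro ext inS_fam_cong) (use that in \<open>auto simp: f_def\<close>)
  have famc_lt: "inS n (cols g) k = inS n (cols g2) k" if "k < r" for k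
    by (intro ext inS_fam_cong) (use that r cg_o in auto)
  have Lr1: "inS n f2 (r - 1) = inS n (cols g) (r - 1)"
    using L2[of "r - 1"] famc_lt[of "r - 1"] r by simp
  have Lr1': "inS n f (r - 1) = inS n (cols g2) (r - 1)"
    using L2[of "r - 1"] fam_lt[of "r - 1"] r by simp
  have eq: "inS n f k = inS n (cols g) k" if k: "k \<in> {1..n}" for k
  proof -
    consider "k < r" | "k = r" | "Suc r \<le> k" by linarith
    then show ?thesis
    proof cases
      case 1 then show ?thesis using fam_lt famc_lt L2 k by simp
    next
      case 2
      show ?thesis unfolding 2
      proof (rule inS_eqI)
        fix j assume j: "j \<in> {1..r}"
        show "inS n (cols g) r (f j)"
        proof (cases "j = r")
          case True
          have a: "inS n (cols g) r (cols g r)" using r by (intro inS_vec) auto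
          have "inS n (cols g) (r - 1) z0" using z0(1) Lr1 by simp
          then have b: "inS n (cols g) r z0" by (rule inS_mono[rotated]) simp
          show ?thesis unfolding True
          proof (rule inS_lin'[OF a b, where a="1/\<kappa>" and b="- 1/\<kappa>"])
            fix i assume i: "i \<in> {1..n}"
            have "fr i = (1/\<kappa>) * (z0 i + \<kappa> * fr i) + (- 1/\<kappa>) * z0 i"
              using k0 by (simp add: field_simps)
            then show "f r i = 1 / \<kappa> * cols g r i + - 1 / \<kappa> * z0 i" using v[OF i] by (simp add: f_def)
          qed
        next
          case False
          then have "inS n f2 (r - 1) (f2 j)" using j by (intro inS_vec) auto
          then have "inS n (cols g) (r - 1) (f2 j)" using Lr1 by simp
          then have "inS n (cols g) r (f2 j)" by (rule inS_mono[rotated]) simp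
          then show ?thesis using False j by (simp add: f_def)
        qed
      next
        fix j assume j: "j \<in> {1..r}"
        show "inS n f r (cols g j)"
        proof (cases "j = r")
          case True
          have "inS n f (r - 1) z0" using z0(1) Lr1' L2[of "r - 1"] r by simp
          then have a: "inS n f r z0" by (rule inS_mono[rotated]) simp
          have b: "inS n f r fr" using inS_vec[of r r n f] r by (simp add: f_def)
          show ?thesis unfolding True
            by (rule inS_lin'[OF a b, where a=1 and b=\<kappa>]) (use v in auto)
        next
          case False
          then have "inS n (cols g2) (r - 1) (cols g2 j)" using j by (intro inS_vec) auto
          then have "inS n f (r - 1) (cols g2 j)" using Lr1' by simp
          then have "inS n f r (cols g2 j)" by (rule inS_mono[rotated]) simp
          then show ?thesis using cg_o False j r by (subst inS_cong[where y="cols g2 j"]) auto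
        qed
      qed
    next
      case 3
      have "inS n f k = inS n f2 k"
      proof (rule inS_eqI)
        fix j assume j: "j \<in> {1..k}"
        have vr: "r \<in> {1..k}" "Suc r \<in> {1..k}" using 3 r by auto
        show "inS n f2 k (f j)"
        proof -
          consider "j = r" | "j = Suc r" | "j \<noteq> r" "j \<noteq> Suc r" by blast
          then show ?thesis
          proof cases
            case 1 show ?thesis unfolding 1
              by (rule inS_lin'[OF inS_vec[OF vr(2)] inS_vec[OF vr(1)], where a=1 and b="\<beta> / \<kappa>"]) (simp add: f_def fr_def)
          next
            case 2 then show ?thesis using vr by (simp add: f_def inS_vec)
          next
            case 3 then show ?thesis using j by (simp add: f_def inS_vec)
          qed
        qed
      next
        fix j assume j: "j \<in> {1..k}"
        have vr: "r \<in> {1..k}" "Suc r \<in> {1..k}" using 3 r by auto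
        show "inS n f k (f2 j)"
        proof -
          consider "j = r" | "j = Suc r" | "j \<noteq> r" "j \<noteq> Suc r" by blast
          then show ?thesis
          proof cases
            case 1 then show ?thesis using inS_vec[OF vr(2), of n f] by (simp add: f_def)
          next
            case 2 show ?thesis unfolding 2
              by (rule inS_lin'[OF inS_vec[OF vr(1)] inS_vec[OF vr(2)], where a=1 and b="- (\<beta> / \<kappa>)"]) (simp add: f_def fr_def)
          next
            case 3 then show ?thesis using j inS_vec[OF j, of n f] by (simp add: f_def)
          qed
        qed
      qed
      also have "\<dots> = inS n (cols g2) k" using L2 k by simp
      also have "\<dots> = inS n (cols g) k" using rot_span[OF e r k] 3 by simp
      finally show ?thesis .
    qed
  qed
  have "word_perm (u @ [r]) = w \<circ> sgen r" by (simp add: w_def word_perm_snoc)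
  then show ?case unfolding Cell_def g_def[symmetric] using Pnew eq by auto
qed


lemma char_cols:
  assumes "is_word n u" "length u = perm_length n (word_perm u)" "\<forall>i<length u. 0 < t i \<and> t i < pi"
    and r: "1 \<le> r" "r < n" "word_perm u r < word_perm u (Suc r)"
  shows "inS n (cols (Gm n u t)) r z \<longleftrightarrow> (\<exists>x y. inS n (cols (Gm n u t)) (r - 1) x \<and> inS n (cols (Gm n u t)) (Suc r) y \<and>
            (\<forall>i\<in>{1..n}. word_perm u r < i \<longrightarrow> y i = 0) \<and> (\<forall>i\<in>{1..n}. z i = x i + y i))"
proof -
  obtain f where P: "Piv n (word_perm u) f" and L: "\<And>k. k \<le> n \<Longrightarrow> inS n f k = inS n (cols (Gm n u t)) k"
    using Cell_Gm[OF assms(1-3)] by (rule Cell_all) blast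
  have wp: "word_perm u permutes {1..n}" by (rule word_perm_permutes[OF assms(1)])
  show ?thesis
    using piv_char[OF P wp r, of z] L[of r] L[of "r - 1"] L[of "Suc r"] r by simp
qed

lemma ip_rot: "ip n (\<lambda>i. cos x * p i - sin x * q i) z = cos x * ip n p z - sin x * ip n q z"
  by (rule ip_lin_left_minus)

lemma Inj_Gm:
  assumes "is_word n u" "length u = perm_length n (word_perm u)"
    "\<forall>i<length u. 0 < t i \<and> t i < pi" "\<forall>i<length u. 0 < s i \<and> s i < pi"
    "\<forall>k\<in>{1..n}. inS n (cols (Gm n u t)) k = inS n (cols (Gm n u s)) k"
  shows "\<forall>i<length u. t i = s i"
  using assms
proof (induction u rule: rev_induct)
  case Nil then show ?case by simp
next
  case (snoc r u)
  have r: "1 \<le> r" "r < n" and wu: "is_word n u" using snoc.prems(1) by auto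
  note red = reduced_snoc[OF snoc.prems(1,2)]
  have tu: "\<forall>i<length u. 0 < t i \<and> t i < pi" and su: "\<forall>i<length u. 0 < s i \<and> s i < pi"
    using snoc.prems(3,4) by auto
  define g2 where "g2 = Gm n u t"
  define h2 where "h2 = Gm n u s"
  define g where "g = Gm n (u @ [r]) t"
  define h where "h = Gm n (u @ [r]) s"
  define \<theta> where "\<theta> = t (length u)"
  define \<sigma> where "\<sigma> = s (length u)"
  have eg: "eqr n g (stepf g2 r \<theta>)" unfolding g_def g2_def \<theta>_def by (rule Gm_snoc_eqr[OF r])
  have eh: "eqr n h (stepf h2 r \<sigma>)" unfolding h_def h2_def \<sigma>_def by (rule Gm_snoc_eqr[OF r])
  have H: "\<And>k. k \<in> {1..n} \<Longrightarrow> inS n (cols g) k = inS n (cols h) k"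
    using snoc.prems(5) by (simp add: g_def h_def)
  have ne: "inS n (cols g2) k = inS n (cols h2) k" if k: "k \<in> {1..n}" "k \<noteq> r" for k
    using rot_span[OF eg r k] rot_span[OF eh r k] H[OF k(1)] by simp
  have ne0: "inS n (cols g2) (r - 1) = inS n (cols h2) (r - 1)"
  proof (cases "r - 1 = 0")
    case True then show ?thesis using inS_0_eq[of n "cols g2" "cols h2"] by simp
  next
    case False then show ?thesis by (intro ne) (use r in auto)
  qed
  have neS: "inS n (cols g2) (Suc r) = inS n (cols h2) (Suc r)" using ne[of "Suc r"] r by simp
  have eqr: "inS n (cols g2) r = inS n (cols h2) r"
  proof (rule ext)
    fix z
    show "inS n (cols g2) r z = inS n (cols h2) r z"
      unfolding g2_def h2_def
      using char_cols[OF wu red(1) tu r red(2), of z] char_cols[OF wu red(1) su r red(2), of z]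
        ne0 neS by (simp add: g2_def h2_def)
  qed
  have all: "\<forall>k\<in>{1..n}. inS n (cols (Gm n u t)) k = inS n (cols (Gm n u s)) k"
  proof
    fix k assume k: "k \<in> {1..n}"
    show "inS n (cols (Gm n u t)) k = inS n (cols (Gm n u s)) k"
      using ne[OF k] eqr unfolding g2_def h2_def by (cases "k = r") auto
  qed
  have IH: "\<forall>i<length u. t i = s i" by (rule snoc.IH[OF wu red(1) tu su all])
  then have gh: "g2 = h2" unfolding g2_def h2_def by (intro Gm_cong) auto
  have ON2: "ON n g2" unfolding g2_def by (rule ON_Gm[OF wu])
  have "inS n (cols g) r (cols g r)" using r by (intro inS_vec) auto
  then have "inS n (cols h) r (cols g r)" using H[of r] r by simp
  then obtain a where a: "\<forall>i\<in>{1..n}. cols g r i = (\<Sum>m\<in>{1..r}. a m * cols h m i)"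
    unfolding inS_def by blast
  have cgr: "cols g r i = cos \<theta> * cols g2 r i - sin \<theta> * cols g2 (Suc r) i" if "i \<in> {1..n}" for i
    using eg that r by (auto simp: eqr_def stepf_def cols_def)
  have chr: "cols h r i = cos \<sigma> * cols g2 r i - sin \<sigma> * cols g2 (Suc r) i" if "i \<in> {1..n}" for i
    using eh that r gh by (auto simp: eqr_def stepf_def cols_def)
  have cho: "cols h m i = cols g2 m i" if "i \<in> {1..n}" "m \<in> {1..n}" "m < r" for i m
    using eh that gh by (auto simp: eqr_def stepf_def cols_def)
  have on: "ip n (cols g2 p) (cols g2 q) = (if p = q then 1 else 0)" if "p \<in> {1..n}" "q \<in> {1..n}" for p q
    using ON2 that by (simp add: ON_def cols_def)
  have ipq: "ip n (cols g r) (cols g2 q) = (\<Sum>m\<in>{1..r}. a m * ip n (cols h m) (cols g2 q))" for q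
    by (rule ip_comb[OF a]) simp
  have ipm: "ip n (cols h m) (cols g2 q) = 0" if "m \<in> {1..r - 1}" "q \<in> {r, Suc r}" for m q
  proof -
    have "ip n (cols h m) (cols g2 q) = ip n (cols g2 m) (cols g2 q)"
      using cho that r by (intro ip_cong) auto
    also have "\<dots> = 0" using on[of m q] that r by auto
    finally show ?thesis .
  qed
  have sumq: "(\<Sum>m\<in>{1..r}. a m * ip n (cols h m) (cols g2 q)) = a r * ip n (cols h r) (cols g2 q)"
    if "q \<in> {r, Suc r}" for q
  proof -
    have "{1..r} = insert r {1..r - 1}" using r by auto
    then have "(\<Sum>m\<in>{1..r}. a m * ip n (cols h m) (cols g2 q)) = a r * ip n (cols h r) (cols g2 q) + (\<Sum>m\<in>{1..r - 1}. a m * ip n (cols h m) (cols g2 q))"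
      using r by simp
    also have "(\<Sum>m\<in>{1..r - 1}. a m * ip n (cols h m) (cols g2 q)) = 0"
      using ipm that by (intro sum.neutral) auto
    finally show ?thesis by simp
  qed
  have rr: "r \<in> {1..n}" "Suc r \<in> {1..n}" using r by auto
  have ig_r: "ip n (cols g r) (cols g2 q) = cos \<theta> * ip n (cols g2 r) (cols g2 q) - sin \<theta> * ip n (cols g2 (Suc r)) (cols g2 q)" for q
    by (subst ip_cong[OF cgr refl]) (auto simp: ip_rot)
  have ih_r: "ip n (cols h r) (cols g2 q) = cos \<sigma> * ip n (cols g2 r) (cols g2 q) - sin \<sigma> * ip n (cols g2 (Suc r)) (cols g2 q)" for q
    by (subst ip_cong[OF chr refl]) (auto simp: ip_rot)
  have c1: "cos \<theta> = a r * cos \<sigma>"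
    using ipq[of r] sumq[of r] ig_r[of r] ih_r[of r] on rr by simp
  have c2: "sin \<theta> = a r * sin \<sigma>"
    using ipq[of "Suc r"] sumq[of "Suc r"] ig_r[of "Suc r"] ih_r[of "Suc r"] on rr by simp
  have "sin (\<theta> - \<sigma>) = 0" by (simp add: sin_diff c1 c2)
  moreover have "0 < \<theta>" "\<theta> < pi" "0 < \<sigma>" "\<sigma> < pi"
    using snoc.prems(3)[rule_format, of "length u"] snoc.prems(4)[rule_format, of "length u"]
    by (auto simp: \<theta>_def \<sigma>_def)
  then have "- pi < \<theta> - \<sigma>" "\<theta> - \<sigma> < pi" by auto
  ultimately have "\<theta> = \<sigma>" using sin_eq_0_pi by force
  then show ?case using IH by (auto simp: \<theta>_def \<sigma>_def less_Suc_eq)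
qed

lemma Phi_inj:
  assumes "is_word n u" "length u = perm_length n (word_perm u)"
    "t \<in> open_cube (length u)" "s \<in> open_cube (length u)" "Phi n u t = Phi n u s"
  shows "t = s"
proof -
  have "\<forall>k\<in>{1..n}. inS n (cols (Gm n u t)) k = inS n (cols (Gm n u s)) k"
    using assms(5) by (auto simp: Phi_Gm intro!: flag_eq_inS)
  then have "\<forall>i<length u. t i = s i"
    using Inj_Gm[OF assms(1,2)] assms(3,4) by (auto simp: open_cube_def)
  show ?thesis
  proof (rule ext)
    fix x show "t x = s x"
      using \<open>\<forall>i<length u. t i = s i\<close> assms(3,4) by (cases "x < length u") (auto simp: open_cube_def)
  qed
qed


definition swapS :: "nat \<Rightarrow> (nat \<Rightarrow> real) \<Rightarrow> nat \<Rightarrow> real" where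
  "swapS m x = (\<lambda>i. x (Transposition.transpose m (Suc m) i))"

definition reflS :: "nat \<Rightarrow> (nat \<Rightarrow> real) \<Rightarrow> nat \<Rightarrow> real" where
  "reflS k x = (\<lambda>i. if i = k then - x i else x i)"

definition permS :: "nat \<Rightarrow> (nat \<Rightarrow> real) \<Rightarrow> nat \<Rightarrow> real" where
  "permS k x = (\<lambda>i. x (Transposition.transpose 0 k i))"

definition rotp :: "nat \<Rightarrow> (nat \<Rightarrow> real) \<Rightarrow> nat \<Rightarrow> real" where
  "rotp m x = (\<lambda>i. if i = m then (x m - x (Suc m)) / sqrt 2
     else if i = Suc m then (x m + x (Suc m)) / sqrt 2 else x i)"

definition rotm :: "nat \<Rightarrow> (nat \<Rightarrow> real) \<Rightarrow> nat \<Rightarrow> real" where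
  "rotm m x = (\<lambda>i. if i = m then (x m + x (Suc m)) / sqrt 2
     else if i = Suc m then (x (Suc m) - x m) / sqrt 2 else x i)"

lemma sqrt2_sq: "sqrt 2 * sqrt 2 = (2::real)" by simp

lemma rotp_rotm: "rotp m \<circ> rotm m = id"
proof (rule ext)+
  fix x i
  have s: "sqrt 2 * sqrt 2 = (2::real)" by simp
  show "(rotp m \<circ> rotm m) x i = id x i"
    by (auto simp: rotp_def rotm_def field_simps s)
qed

lemma permS_permS: "permS k \<circ> permS k = id"
  by (rule ext)+ (simp add: permS_def)

lemma reflS_conj: "reflS k = permS k \<circ> reflS 0 \<circ> permS k"
  by (rule ext)+ (auto simp: reflS_def permS_def Transposition.transpose_def)

lemma swapS_conj: "swapS m = rotp m \<circ> reflS (Suc m) \<circ> rotm m"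
proof (rule ext)+
  fix x i
  have s: "sqrt 2 * sqrt 2 = (2::real)" by simp
  show "swapS m x i = (rotp m \<circ> reflS (Suc m) \<circ> rotm m) x i"
    by (auto simp: swapS_def rotp_def rotm_def reflS_def Transposition.transpose_def field_simps s)
qed

lemma sum_two_pts:
  assumes "finite S" "a \<in> S" "b \<in> S" "a \<noteq> b" "\<And>i. i \<in> S \<Longrightarrow> i \<noteq> a \<Longrightarrow> i \<noteq> b \<Longrightarrow> g i = (0::real)"
  shows "sum g S = g a + g b"
proof -
  have "sum g S = sum g {a, b}"
    by (rule sum.mono_neutral_right) (use assms in auto)
  then show ?thesis using assms by simp
qed

lemma cm_proj: "continuous_map (powertop_real UNIV) euclideanreal (\<lambda>x. x j)"
  by (metis UNIV_I continuous_map_product_projection)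

lemma cont_nsphere_intro:
  assumes "\<And>j. continuous_map (powertop_real UNIV) euclideanreal (\<lambda>x. f x j)"
    and "\<And>x. (\<Sum>i\<le>n. x i ^ 2) = 1 \<Longrightarrow> (\<forall>i>n. x i = 0) \<Longrightarrow> (\<Sum>i\<le>n. f x i ^ 2) = 1 \<and> (\<forall>i>n. f x i = 0)"
  shows "continuous_map (nsphere n) (nsphere n) f"
  unfolding nsphere continuous_map_in_subtopology
  apply (intro conjI continuous_map_from_subtopology)
   apply (simp add: continuous_map_componentwise_UNIV assms(1))
  using assms(2) by auto

lemma cont_permS: "k \<le> n \<Longrightarrow> continuous_map (nsphere n) (nsphere n) (permS k)"
proof (rule cont_nsphere_intro)
  fix j show "continuous_map (powertop_real UNIV) euclideanreal (\<lambda>x. permS k x j)"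
    unfolding permS_def by (rule cm_proj)
next
  fix x :: "nat \<Rightarrow> real" assume k: "k \<le> n" and x: "(\<Sum>i\<le>n. x i ^ 2) = 1" "\<forall>i>n. x i = 0"
  let ?t = "Transposition.transpose 0 k"
  have bij: "bij_betw ?t {..n} {..n}"
    using k by (intro bij_betwI[where g="?t"]) (auto simp: Transposition.transpose_def)
  have "(\<Sum>i\<le>n. permS k x i ^ 2) = (\<Sum>i\<le>n. x i ^ 2)"
    unfolding permS_def using sum.reindex_bij_betw[OF bij, of "\<lambda>i. x i ^ 2"] by simp
  moreover have "\<forall>i>n. permS k x i = 0"
    using x k by (auto simp: permS_def Transposition.transpose_def)
  ultimately show "(\<Sum>i\<le>n. permS k x i ^ 2) = 1 \<and> (\<forall>i>n. permS k x i = 0)" using x by simp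
qed

lemma rot_sum:
  assumes m: "Suc m \<le> n" and f: "\<And>i. i \<noteq> m \<Longrightarrow> i \<noteq> Suc m \<Longrightarrow> f i = x i"
    and two: "f m ^ 2 + f (Suc m) ^ 2 = x m ^ 2 + x (Suc m) ^ 2"
  shows "(\<Sum>i\<le>n. f i ^ 2) = (\<Sum>i\<le>n. (x i :: real) ^ 2)"
proof -
  have "(\<Sum>i\<le>n. f i ^ 2 - x i ^ 2) = (f m ^ 2 - x m ^ 2) + (f (Suc m) ^ 2 - x (Suc m) ^ 2)"
    by (rule sum_two_pts) (use m f in auto)
  then have "(\<Sum>i\<le>n. f i ^ 2) - (\<Sum>i\<le>n. x i ^ 2) = 0" using two by (simp add: sum_subtractf)
  then show ?thesis by simp
qed

lemma cont_rotp: "Suc m \<le> n \<Longrightarrow> continuous_map (nsphere n) (nsphere n) (rotp m)"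
proof (rule cont_nsphere_intro)
  fix j show "continuous_map (powertop_real UNIV) euclideanreal (\<lambda>x. rotp m x j)"
    unfolding rotp_def by (auto intro!: continuous_intros cm_proj)
next
  fix x :: "nat \<Rightarrow> real" assume m: "Suc m \<le> n" and x: "(\<Sum>i\<le>n. x i ^ 2) = 1" "\<forall>i>n. x i = 0"
  have two: "rotp m x m ^ 2 + rotp m x (Suc m) ^ 2 = x m ^ 2 + x (Suc m) ^ 2"
    by (simp add: rotp_def power_divide field_simps power2_eq_square)
  have "(\<Sum>i\<le>n. rotp m x i ^ 2) = (\<Sum>i\<le>n. x i ^ 2)"
    by (rule rot_sum[OF m _ two]) (simp add: rotp_def)
  moreover have "\<forall>i>n. rotp m x i = 0" using x m by (auto simp: rotp_def)
  ultimately show "(\<Sum>i\<le>n. rotp m x i ^ 2) = 1 \<and> (\<forall>i>n. rotp m x i = 0)" using x by simp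
qed

lemma cont_rotm: "Suc m \<le> n \<Longrightarrow> continuous_map (nsphere n) (nsphere n) (rotm m)"
proof (rule cont_nsphere_intro)
  fix j show "continuous_map (powertop_real UNIV) euclideanreal (\<lambda>x. rotm m x j)"
    unfolding rotm_def by (auto intro!: continuous_intros cm_proj)
next
  fix x :: "nat \<Rightarrow> real" assume m: "Suc m \<le> n" and x: "(\<Sum>i\<le>n. x i ^ 2) = 1" "\<forall>i>n. x i = 0"
  have two: "rotm m x m ^ 2 + rotm m x (Suc m) ^ 2 = x m ^ 2 + x (Suc m) ^ 2"
    by (simp add: rotm_def power_divide field_simps power2_eq_square)
  have "(\<Sum>i\<le>n. rotm m x i ^ 2) = (\<Sum>i\<le>n. x i ^ 2)"
    by (rule rot_sum[OF m _ two]) (simp add: rotm_def)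
  moreover have "\<forall>i>n. rotm m x i = 0" using x m by (auto simp: rotm_def)
  ultimately show "(\<Sum>i\<le>n. rotm m x i ^ 2) = 1 \<and> (\<forall>i>n. rotm m x i = 0)" using x by simp
qed

lemma cont_reflS: "continuous_map (nsphere n) (nsphere n) (reflS k)"
  unfolding reflS_def by (rule continuous_map_nsphere_reflection)

lemma deg_inverse_pair:
  assumes "continuous_map (nsphere n) (nsphere n) f" "continuous_map (nsphere n) (nsphere n) g" "f \<circ> g = id"
  shows "Brouwer_degree2 n f * Brouwer_degree2 n g = 1"
  using Brouwer_degree2_compose[OF assms(2,1)] assms(3) by simp

lemma deg_reflS: "Brouwer_degree2 n (reflS k) = -1" if "k \<le> n"
proof -
  have r0: "Brouwer_degree2 n (reflS 0) = -1"
  proof -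
    have "reflS 0 = (\<lambda>x i. if i = 0 then - x i else x i)" by (rule ext)+ (simp add: reflS_def)
    then show ?thesis using Brouwer_degree2_reflection[of n] by simp
  qed
  have cp: "continuous_map (nsphere n) (nsphere n) (permS k)" by (rule cont_permS[OF that])
  have c0: "continuous_map (nsphere n) (nsphere n) (reflS 0)" by (rule cont_reflS)
  have "Brouwer_degree2 n (permS k \<circ> reflS 0 \<circ> permS k)
      = Brouwer_degree2 n (permS k) * Brouwer_degree2 n (reflS 0) * Brouwer_degree2 n (permS k)"
    using Brouwer_degree2_compose[OF cp continuous_map_compose[OF c0 cp]] Brouwer_degree2_compose[OF c0 cp]
    by (simp add: comp_assoc)
  also have "\<dots> = - (Brouwer_degree2 n (permS k) * Brouwer_degree2 n (permS k))" using r0 by simp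
  also have "\<dots> = -1" using deg_inverse_pair[OF cp cp permS_permS] by simp
  finally show ?thesis by (simp add: reflS_conj[symmetric])
qed

lemma deg_swapS: "Suc m \<le> n \<Longrightarrow> Brouwer_degree2 n (swapS m) = -1"
proof -
  assume m: "Suc m \<le> n"
  have cp: "continuous_map (nsphere n) (nsphere n) (rotp m)" by (rule cont_rotp[OF m])
  have cm: "continuous_map (nsphere n) (nsphere n) (rotm m)" by (rule cont_rotm[OF m])
  have cr: "continuous_map (nsphere n) (nsphere n) (reflS (Suc m))" by (rule cont_reflS)
  have "Brouwer_degree2 n (rotp m \<circ> reflS (Suc m) \<circ> rotm m)
      = Brouwer_degree2 n (rotp m) * Brouwer_degree2 n (reflS (Suc m)) * Brouwer_degree2 n (rotm m)"
    using Brouwer_degree2_compose[OF continuous_map_compose[OF cm cr] cp] Brouwer_degree2_compose[OF cm cr]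
    by (simp add: comp_assoc)
  also have "\<dots> = - (Brouwer_degree2 n (rotp m) * Brouwer_degree2 n (rotm m))" using deg_reflS[OF m] by simp
  also have "\<dots> = -1" using deg_inverse_pair[OF cp cm rotp_rotm] by simp
  finally show ?thesis by (simp add: swapS_conj[symmetric])
qed


lemma istopology_quot: "istopology (\<lambda>U. U \<subseteq> q ` topspace X \<and> openin X {x \<in> topspace X. q x \<in> U})"
proof -
  have 1: "S \<inter> T \<subseteq> q ` topspace X \<and> openin X {x \<in> topspace X. q x \<in> S \<inter> T}"
    if S: "S \<subseteq> q ` topspace X \<and> openin X {x \<in> topspace X. q x \<in> S}"
    and T: "T \<subseteq> q ` topspace X \<and> openin X {x \<in> topspace X. q x \<in> T}" for S T
  proof -
    have "{x \<in> topspace X. q x \<in> S \<inter> T} = {x \<in> topspace X. q x \<in> S} \<inter> {x \<in> topspace X. q x \<in> T}" by auto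
    then show ?thesis using S T by auto
  qed
  have 2: "\<Union>K \<subseteq> q ` topspace X \<and> openin X {x \<in> topspace X. q x \<in> \<Union>K}"
    if K: "\<forall>U\<in>K. U \<subseteq> q ` topspace X \<and> openin X {x \<in> topspace X. q x \<in> U}" for K
  proof -
    have "{x \<in> topspace X. q x \<in> \<Union>K} = \<Union>((\<lambda>U. {x \<in> topspace X. q x \<in> U}) ` K)" by auto
    then show ?thesis using K by (auto intro!: openin_Union)
  qed
  show ?thesis by (simp only: istopology_def) (use 1 2 in blast)
qed

lemma openin_quot:
  "openin (quotient_topology X q) U \<longleftrightarrow> U \<subseteq> q ` topspace X \<and> openin X {x \<in> topspace X. q x \<in> U}"
  unfolding quotient_topology_def by (simp add: topology_inverse'[OF istopology_quot])

lemma topspace_quot: "topspace (quotient_topology X q) = q ` topspace X"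
proof -
  have "openin (quotient_topology X q) (q ` topspace X)"
  proof -
    have "{x \<in> topspace X. q x \<in> q ` topspace X} = topspace X" by auto
    then show ?thesis unfolding openin_quot by simp
  qed
  then have "q ` topspace X \<subseteq> topspace (quotient_topology X q)" by (rule openin_subset)
  moreover have "topspace (quotient_topology X q) \<subseteq> q ` topspace X"
    using openin_quot[of X q "topspace (quotient_topology X q)"] by simp
  ultimately show ?thesis by blast
qed

lemma quotient_map_quot: "quotient_map X (quotient_topology X q) q"
  unfolding quotient_map_def topspace_quot
  by (auto simp: openin_quot)

lemma map_degree_cong:
  "(\<And>x. x \<in> topspace X \<Longrightarrow> f x = g x) \<Longrightarrow> map_degree p X f = map_degree p X g"
  unfolding map_degree_def by (simp add: hom_induced_eq[of X f g])

lemma map_degree_nsphere: "map_degree p (nsphere p) f = Brouwer_degree2 p f"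
  unfolding map_degree_def Brouwer_degree2_def by simp

lemma map_degree_conj:
  assumes hk: "homeomorphic_maps X Y h k" and f: "continuous_map X X f"
  shows "map_degree p X f = map_degree p Y (h \<circ> f \<circ> k)"
proof -
  let ?GX = "reduced_homology_group (int p) X" and ?GY = "reduced_homology_group (int p) Y"
  let ?Hh = "hom_induced (int p) X {} Y {} h" and ?Hk = "hom_induced (int p) Y {} X {} k"
  let ?Hf = "hom_induced (int p) X {} X {} f" and ?Hg = "hom_induced (int p) Y {} Y {} (h \<circ> f \<circ> k)"
  have ch: "continuous_map X Y h" and ck: "continuous_map Y X k"
    and kh: "\<And>x. x \<in> topspace X \<Longrightarrow> k (h x) = x" and hk': "\<And>y. y \<in> topspace Y \<Longrightarrow> h (k y) = y"
    using hk by (auto simp: homeomorphic_maps_def)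
  have iso: "group_isomorphisms ?GX ?GY ?Hh ?Hk"
  proof (rule homotopy_equivalence_reduced_homology_group_isomorphisms[OF ch ck])
    show "homotopic_with (\<lambda>h. True) X X (k \<circ> h) id"
      by (rule homotopic_with_equal) (use ch ck kh in \<open>auto intro: continuous_map_compose\<close>)
    show "homotopic_with (\<lambda>k. True) Y Y (h \<circ> k) id"
      by (rule homotopic_with_equal) (use ch ck hk' in \<open>auto intro: continuous_map_compose\<close>)
  qed
  have Hh: "?Hh \<in> hom ?GX ?GY" and Hk: "?Hk \<in> hom ?GY ?GX"
    and Hkh: "\<And>x. x \<in> carrier ?GX \<Longrightarrow> ?Hk (?Hh x) = x" and Hhk: "\<And>y. y \<in> carrier ?GY \<Longrightarrow> ?Hh (?Hk y) = y"
    using iso by (auto simp: group_isomorphisms_def)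
  have Hg: "?Hg y = ?Hh (?Hf (?Hk y))" for y
  proof -
    have "?Hg = ?Hh \<circ> hom_induced (int p) Y {} X {} (f \<circ> k)"
      using hom_induced_compose[OF continuous_map_compose[OF ck f] _ ch, of "{}" "{}" "{}" "int p"]
      by (simp add: comp_assoc)
    also have "hom_induced (int p) Y {} X {} (f \<circ> k) = ?Hf \<circ> ?Hk"
      using hom_induced_compose[OF ck _ f, of "{}" "{}" "{}" "int p"] by simp
    finally show ?thesis by (simp add: comp_def)
  qed
  have Hf_c: "\<And>x. x \<in> carrier ?GX \<Longrightarrow> ?Hf x \<in> carrier ?GX" by (rule hom_induced_reduced)
  have Hh_c: "\<And>x. x \<in> carrier ?GX \<Longrightarrow> ?Hh x \<in> carrier ?GY" by (rule hom_induced_reduced)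
  have Hk_c: "\<And>y. y \<in> carrier ?GY \<Longrightarrow> ?Hk y \<in> carrier ?GX" by (rule hom_induced_reduced)
  have powh: "\<And>x d. x \<in> carrier ?GX \<Longrightarrow> ?Hh (x [^]\<^bsub>?GX\<^esub> (d::int)) = ?Hh x [^]\<^bsub>?GY\<^esub> d"
    using hom_int_pow[OF Hh] by simp
  have powk: "\<And>y d. y \<in> carrier ?GY \<Longrightarrow> ?Hk (y [^]\<^bsub>?GY\<^esub> (d::int)) = ?Hk y [^]\<^bsub>?GX\<^esub> d"
    using hom_int_pow[OF Hk] by simp
  have eqv: "(\<forall>x\<in>carrier ?GX. ?Hf x = x [^]\<^bsub>?GX\<^esub> d) \<longleftrightarrow> (\<forall>y\<in>carrier ?GY. ?Hg y = y [^]\<^bsub>?GY\<^esub> d)" for d :: int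
  proof
    assume A: "\<forall>x\<in>carrier ?GX. ?Hf x = x [^]\<^bsub>?GX\<^esub> d"
    show "\<forall>y\<in>carrier ?GY. ?Hg y = y [^]\<^bsub>?GY\<^esub> d"
    proof
      fix y assume y: "y \<in> carrier ?GY"
      have "?Hg y = ?Hh (?Hk y [^]\<^bsub>?GX\<^esub> d)" using Hg A Hk_c[OF y] by simp
      also have "\<dots> = ?Hh (?Hk y) [^]\<^bsub>?GY\<^esub> d" by (rule powh[OF Hk_c[OF y]])
      also have "\<dots> = y [^]\<^bsub>?GY\<^esub> d" using Hhk[OF y] by simp
      finally show "?Hg y = y [^]\<^bsub>?GY\<^esub> d" .
    qed
  next
    assume B: "\<forall>y\<in>carrier ?GY. ?Hg y = y [^]\<^bsub>?GY\<^esub> d"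
    show "\<forall>x\<in>carrier ?GX. ?Hf x = x [^]\<^bsub>?GX\<^esub> d"
    proof
      fix x assume x: "x \<in> carrier ?GX"
      have "?Hf x = ?Hk (?Hh (?Hf x))" using Hkh[OF Hf_c[OF x]] by simp
      also have "?Hh (?Hf x) = ?Hg (?Hh x)" using Hg Hkh[OF x] by simp
      also have "\<dots> = ?Hh x [^]\<^bsub>?GY\<^esub> d" using B Hh_c[OF x] by simp
      also have "?Hk \<dots> = ?Hk (?Hh x) [^]\<^bsub>?GX\<^esub> d" by (rule powk[OF Hh_c[OF x]])
      also have "\<dots> = x [^]\<^bsub>?GX\<^esub> d" using Hkh[OF x] by simp
      finally show "?Hf x = x [^]\<^bsub>?GX\<^esub> d" .
    qed
  qed
  show ?thesis unfolding map_degree_def using eqv by simp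
qed


definition ycot :: "(nat \<Rightarrow> real) \<Rightarrow> nat \<Rightarrow> real" where
  "ycot t i = tan (t i - pi / 2)"

definition Sy :: "nat \<Rightarrow> (nat \<Rightarrow> real) \<Rightarrow> real" where
  "Sy l t = (\<Sum>i<l. (ycot t i)\<^sup>2)"

definition phi :: "nat \<Rightarrow> (nat \<Rightarrow> real) \<Rightarrow> nat \<Rightarrow> real" where
  "phi l t = (\<lambda>k. if k < l then 2 * ycot t k / (1 + Sy l t)
      else if k = l then (Sy l t - 1) / (Sy l t + 1) else 0)"

definition Npole :: "nat \<Rightarrow> nat \<Rightarrow> real" where
  "Npole l = (\<lambda>k. if k = l then 1 else 0)"

lemma Sy_nonneg: "0 \<le> Sy l t"
  unfolding Sy_def by (intro sum_nonneg) auto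

lemma tan_shift: "tan (x - pi / 2) = - cos x / sin x"
  by (simp add: tan_def sin_diff cos_diff)

lemma one_plus_ycot: "sin x \<noteq> 0 \<Longrightarrow> 1 + (tan (x - pi / 2))\<^sup>2 = 1 / (sin x)\<^sup>2"
proof -
  assume s: "sin x \<noteq> 0"
  have s2: "(sin x)\<^sup>2 \<noteq> 0" using s by simp
  have e: "(sin x)\<^sup>2 + (cos x)\<^sup>2 = 1" by (rule sin_cos_squared_add)
  have "1 / (sin x)\<^sup>2 = ((sin x)\<^sup>2 + (cos x)\<^sup>2) / (sin x)\<^sup>2" by (simp only: e)
  also have "\<dots> = 1 + (cos x)\<^sup>2 / (sin x)\<^sup>2" using s2 by (simp only: add_divide_distrib) simp
  also have "\<dots> = 1 + (- cos x / sin x)\<^sup>2" by (simp add: power_divide)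
  finally have "1 + (- cos x / sin x)\<^sup>2 = 1 / (sin x)\<^sup>2" by simp
  then show ?thesis by (simp only: tan_shift)
qed

lemma phi_bound:
  assumes t: "t \<in> open_cube l" and j: "j < l"
  shows "\<bar>phi l t k - Npole l k\<bar> \<le> 2 * \<bar>sin (t j)\<bar>"
proof -
  define S where "S = Sy l t"
  define s where "s = sin (t j)"
  have S0: "0 \<le> S" by (simp add: S_def Sy_nonneg)
  have tj: "0 < t j" "t j < pi" using t j by (auto simp: open_cube_def)
  have s0: "0 < s" using sin_gt_zero[OF tj] by (simp add: s_def)
  have s1: "s \<le> 1" by (simp add: s_def)
  have yj: "(ycot t j)\<^sup>2 \<le> S"
    unfolding S_def Sy_def by (rule member_le_sum) (use j in auto)
  have "1 + (ycot t j)\<^sup>2 = 1 / s\<^sup>2" unfolding ycot_def s_def by (rule one_plus_ycot) (use s0 s_def in auto)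
  then have "1 / s\<^sup>2 \<le> 1 + S" using yj by simp
  then have D: "1 / (1 + S) \<le> s\<^sup>2" using s0 S0 by (simp add: field_simps)
  have s2: "s\<^sup>2 \<le> s" using s0 s1 by (simp add: power2_eq_square mult_le_cancel_right1)
  consider "k < l" | "k = l" | "l < k" by linarith
  then show ?thesis
  proof cases
    case 1
    have yk: "(ycot t k)\<^sup>2 \<le> S"
      unfolding S_def Sy_def by (rule member_le_sum) (use 1 in auto)
    have "(ycot t k / (1 + S))\<^sup>2 = (ycot t k)\<^sup>2 / (1 + S)\<^sup>2" by (simp add: power_divide)
    also have "\<dots> \<le> (1 + S) / (1 + S)\<^sup>2" using yk S0 by (intro divide_right_mono) auto
    also have "\<dots> = 1 / (1 + S)" using S0 by (simp add: power2_eq_square)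
    also have "\<dots> \<le> s\<^sup>2" by (rule D)
    finally have "\<bar>ycot t k / (1 + S)\<bar> \<le> \<bar>s\<bar>" using abs_le_square_iff by blast
    then show ?thesis using 1 s0 by (simp add: phi_def Npole_def S_def s_def abs_mult)
  next
    case 2
    have "(S - 1) / (S + 1) - 1 = - 2 / (1 + S)" using S0 by (simp add: field_simps)
    then have "\<bar>phi l t k - Npole l k\<bar> = 2 / (1 + S)" using 2 S0 by (simp add: phi_def Npole_def S_def)
    also have "\<dots> \<le> 2 * s\<^sup>2" using D by simp
    also have "\<dots> \<le> 2 * \<bar>s\<bar>" using s2 s0 by simp
    finally show ?thesis by (simp add: s_def)
  next
    case 3 then show ?thesis by (simp add: phi_def Npole_def)
  qed
qed

lemma phi_sphere:
  shows "(\<Sum>k\<le>l. (phi l t k)\<^sup>2) = 1 \<and> (\<forall>k>l. phi l t k = 0)"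
proof
  define S where "S = Sy l t"
  have S0: "0 \<le> S" by (simp add: S_def Sy_nonneg)
  have "(\<Sum>k<l. (phi l t k)\<^sup>2) = (\<Sum>k<l. 4 * (ycot t k)\<^sup>2 / (1 + S)\<^sup>2)"
    by (intro sum.cong) (auto simp: phi_def S_def power_divide power_mult_distrib)
  also have "\<dots> = 4 * S / (1 + S)\<^sup>2"
    by (simp add: S_def Sy_def sum_divide_distrib[symmetric] sum_distrib_left[symmetric])
  finally have a: "(\<Sum>k<l. (phi l t k)\<^sup>2) = 4 * S / (1 + S)\<^sup>2" .
  have b: "(phi l t l)\<^sup>2 = ((S - 1) / (S + 1))\<^sup>2" by (simp add: phi_def S_def)
  have "(\<Sum>k\<le>l. (phi l t k)\<^sup>2) = 4 * S / (1 + S)\<^sup>2 + ((S - 1) / (S + 1))\<^sup>2"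
    using a b by (simp add: lessThan_Suc_atMost[symmetric])
  also have "\<dots> = (4 * S + (S - 1)\<^sup>2) / (1 + S)\<^sup>2"
    by (simp add: power_divide add_divide_distrib add.commute)
  also have "4 * S + (S - 1)\<^sup>2 = (1 + S)\<^sup>2" by (simp add: power2_eq_square algebra_simps)
  also have "(1 + S)\<^sup>2 / (1 + S)\<^sup>2 = 1" using S0 by simp
  finally show "(\<Sum>k\<le>l. (phi l t k)\<^sup>2) = 1" .
  show "\<forall>k>l. phi l t k = 0" by (simp add: phi_def)
qed

lemma Npole_sphere: "(\<Sum>k\<le>l. (Npole l k)\<^sup>2) = 1 \<and> (\<forall>k>l. Npole l k = 0)"
proof -
  have "(\<Sum>k\<le>l. (Npole l k)\<^sup>2) = (\<Sum>k\<le>l. if k = l then 1 else 0)"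
    by (intro sum.cong) (auto simp: Npole_def)
  then show ?thesis by (simp add: Npole_def)
qed

lemma phi_l_lt1: "phi l t l < 1"
  using Sy_nonneg[of l t] by (simp add: phi_def)

lemma phi_inj:
  assumes "t \<in> open_cube l" "s \<in> open_cube l" "phi l t = phi l s"
  shows "t = s"
proof -
  have St: "0 \<le> Sy l t" and Ss: "0 \<le> Sy l s" by (simp_all add: Sy_nonneg)
  have "(Sy l t - 1) / (Sy l t + 1) = (Sy l s - 1) / (Sy l s + 1)"
    using fun_cong[OF assms(3), of l] by (simp add: phi_def)
  then have "(Sy l t - 1) * (Sy l s + 1) = (Sy l s - 1) * (Sy l t + 1)"
    using St Ss by (simp add: frac_eq_eq)
  then have SS: "Sy l t = Sy l s" by (simp add: algebra_simps)
  show ?thesis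
  proof (rule ext)
    fix i show "t i = s i"
    proof (cases "i < l")
      case True
      have "2 * ycot t i / (1 + Sy l t) = 2 * ycot s i / (1 + Sy l s)"
        using fun_cong[OF assms(3), of i] True by (simp add: phi_def)
      then have "2 * ycot t i / (1 + Sy l t) = 2 * ycot s i / (1 + Sy l t)" using SS by simp
      moreover have "1 + Sy l t \<noteq> 0" using St by simp
      ultimately have y: "ycot t i = ycot s i" by (simp add: divide_cancel_right)
      have ti: "- (pi / 2) < t i - pi / 2" "t i - pi / 2 < pi / 2" using assms(1) True by (auto simp: open_cube_def)
      have si: "- (pi / 2) < s i - pi / 2" "s i - pi / 2 < pi / 2" using assms(2) True by (auto simp: open_cube_def)
      have "t i - pi / 2 = s i - pi / 2"
        by (metis arctan_tan[OF ti] arctan_tan[OF si] y[unfolded ycot_def])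
      then show ?thesis by simp
    next
      case False then show ?thesis using assms(1,2) by (simp add: open_cube_def)
    qed
  qed
qed

lemma phi_surj:
  assumes x: "(\<Sum>k\<le>l. (x k)\<^sup>2) = 1" "\<forall>k>l. x k = 0" and xn: "x \<noteq> Npole l"
  shows "\<exists>t\<in>open_cube l. phi l t = x"
proof -
  have xl1: "x l \<le> 1"
  proof -
    have "(x l)\<^sup>2 \<le> (\<Sum>k\<le>l. (x k)\<^sup>2)" by (rule member_le_sum) auto
    then have "(x l)\<^sup>2 \<le> 1\<^sup>2" using x by simp
    then show ?thesis using abs_le_square_iff[of "x l" 1] by simp
  qed
  have sum_split: "(\<Sum>k\<le>l. (x k)\<^sup>2) = (\<Sum>k<l. (x k)\<^sup>2) + (x l)\<^sup>2"
    by (simp add: lessThan_Suc_atMost[symmetric])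
  have xl: "x l < 1"
  proof (rule ccontr)
    assume "\<not> x l < 1" then have xl: "x l = 1" using xl1 by simp
    then have "(\<Sum>k<l. (x k)\<^sup>2) = 0" using x sum_split by simp
    then have "\<forall>k\<in>{..<l}. (x k)\<^sup>2 = 0" by (subst sum_nonneg_eq_0_iff[symmetric]) auto
    have "x = Npole l"
    proof (rule ext)
      fix k show "x k = Npole l k"
        using \<open>\<forall>k\<in>{..<l}. (x k)\<^sup>2 = 0\<close> x(2) xl by (cases "k < l"; cases "l < k") (auto simp: Npole_def)
    qed
    with xn show False by simp
  qed
  define c where "c = 1 - x l"
  have c0: "0 < c" using xl by (simp add: c_def)
  define t where "t = (\<lambda>i. if i < l then pi / 2 + arctan (x i / c) else 0)"
  have tO: "t \<in> open_cube l"
  proof -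
    have "0 < t i \<and> t i < pi" if "i < l" for i
    proof -
      have "- (pi / 2) < arctan (x i / c)" "arctan (x i / c) < pi / 2" using arctan_bounded by auto
      then show ?thesis using that by (simp add: t_def)
    qed
    then show ?thesis by (auto simp: open_cube_def t_def)
  qed
  have yc: "ycot t i = x i / c" if "i < l" for i
    using that by (simp add: ycot_def t_def tan_arctan)
  have "Sy l t = (\<Sum>i<l. (x i)\<^sup>2) / c\<^sup>2"
    unfolding Sy_def by (simp add: yc power_divide sum_divide_distrib)
  also have "(\<Sum>i<l. (x i)\<^sup>2) = 1 - (x l)\<^sup>2" using x sum_split by simp
  finally have S: "Sy l t = (1 - (x l)\<^sup>2) / c\<^sup>2" .
  have fx: "1 - (x l)\<^sup>2 = (1 + x l) * c" by (simp add: c_def power2_eq_square algebra_simps)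
  have S': "Sy l t = (1 + x l) / c" using c0 unfolding S fx by (simp add: power2_eq_square)
  have S1: "1 + Sy l t = 2 / c" using c0 unfolding S' by (simp add: field_simps c_def)
  have S2: "Sy l t + 1 = 2 / c" using S1 by simp
  have S3: "Sy l t - 1 = 2 * x l / c" using c0 unfolding S' by (simp add: field_simps c_def)
  have "phi l t = x"
  proof (rule ext)
    fix k
    consider "k < l" | "k = l" | "l < k" by linarith
    then show "phi l t k = x k"
    proof cases
      case 1 then show ?thesis using c0 by (simp add: phi_def yc S1)
    next
      case 2 then show ?thesis using c0 by (simp add: phi_def S2 S3)
    next
      case 3 then show ?thesis using x by (simp add: phi_def)
    qed
  qed
  then show ?thesis using tO by blast
qed


definition Qc :: "nat \<Rightarrow> (nat \<Rightarrow> real) topology" where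
  "Qc l = subtopology (powertop_real UNIV) (cube l)"

definition hmap :: "nat \<Rightarrow> (nat \<Rightarrow> real) option \<Rightarrow> nat \<Rightarrow> real" where
  "hmap l z = (case z of None \<Rightarrow> Npole l | Some t \<Rightarrow> phi l t)"

lemma topspace_Qc[simp]: "topspace (Qc l) = cube l"
  by (simp add: Qc_def)

lemma cube_sphere_quot: "cube_sphere l = quotient_topology (Qc l) (collapse l)"
  by (simp add: cube_sphere_def Qc_def)

lemma topspace_cube_sphere: "topspace (cube_sphere l) = collapse l ` cube l"
  by (simp add: cube_sphere_quot topspace_quot)

lemma hmap_collapse: "hmap l (collapse l t) = (if t \<in> open_cube l then phi l t else Npole l)"
  by (simp add: hmap_def collapse_def)

lemma open_cube_sub: "open_cube l \<subseteq> cube l"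
  by (auto simp: open_cube_def cube_def less_imp_le)

lemma proj_lim:
  assumes "t0 \<in> cube l"
  shows "((\<lambda>t. t i) \<longlongrightarrow> t0 i) (atin (Qc l) t0)"
proof -
  have "continuous_map (Qc l) euclideanreal (\<lambda>t. t i)"
    unfolding Qc_def by (rule continuous_map_from_subtopology[OF cm_proj])
  then have "limitin euclideanreal (\<lambda>t. t i) (t0 i) (atin (Qc l) t0)"
    using assms by (simp add: continuous_map_atin)
  then show ?thesis by (simp add: limitin_canonical_iff)
qed

lemma ev_cube: "eventually (\<lambda>t. t \<in> cube l) (atin (Qc l) t0)"
  unfolding eventually_atin using openin_topspace[of "Qc l"] by auto

lemma ycot_lim:
  assumes "((\<lambda>t. t i) \<longlongrightarrow> t0 i) F" "0 < t0 i" "t0 i < pi"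
  shows "((\<lambda>t. ycot t i) \<longlongrightarrow> ycot t0 i) F"
proof -
  have "cos (t0 i - pi / 2) \<noteq> 0"
    using sin_gt_zero[OF assms(2,3)] by (simp add: cos_diff)
  then show ?thesis unfolding ycot_def
    by (intro isCont_tendsto_compose[OF isCont_tan] tendsto_intros assms(1))
qed

lemma phi_lim:
  assumes "t0 \<in> open_cube l" "\<And>i. ((\<lambda>t. t i) \<longlongrightarrow> t0 i) F"
  shows "((\<lambda>t. phi l t k) \<longlongrightarrow> phi l t0 k) F"
proof -
  have y: "((\<lambda>t. ycot t i) \<longlongrightarrow> ycot t0 i) F" if "i < l" for i
    using assms that by (intro ycot_lim) (auto simp: open_cube_def)
  have S: "((\<lambda>t. Sy l t) \<longlongrightarrow> Sy l t0) F"
    unfolding Sy_def by (intro tendsto_sum tendsto_power y) auto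
  have S0: "0 \<le> Sy l t0" by (rule Sy_nonneg)
  consider "k < l" | "k = l" | "l < k" by linarith
  then show ?thesis
  proof cases
    case 1
    have "((\<lambda>t. 2 * ycot t k / (1 + Sy l t)) \<longlongrightarrow> 2 * ycot t0 k / (1 + Sy l t0)) F"
      using S0 by (intro tendsto_intros y[OF 1] S) auto
    then show ?thesis using 1 by (simp add: phi_def)
  next
    case 2
    have "((\<lambda>t. (Sy l t - 1) / (Sy l t + 1)) \<longlongrightarrow> (Sy l t0 - 1) / (Sy l t0 + 1)) F"
      using S0 by (intro tendsto_intros S) auto
    then show ?thesis using 2 by (simp add: phi_def)
  next
    case 3 then show ?thesis by (simp add: phi_def)
  qed
qed

lemma cont_Fc: "continuous_map (Qc l) (nsphere l) (\<lambda>t. hmap l (collapse l t))"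
proof -
  have A: "continuous_map (Qc l) (powertop_real UNIV) (\<lambda>t. hmap l (collapse l t))"
    unfolding continuous_map_componentwise_UNIV
  proof
    fix k
    show "continuous_map (Qc l) euclideanreal (\<lambda>t. hmap l (collapse l t) k)"
      unfolding continuous_map_atin limitin_canonical_iff
    proof
      fix t0 assume "t0 \<in> topspace (Qc l)"
      then have t0: "t0 \<in> cube l" by simp
      let ?F = "atin (Qc l) t0"
      have P: "\<And>i. ((\<lambda>t. t i) \<longlongrightarrow> t0 i) ?F" by (rule proj_lim[OF t0])
      show "((\<lambda>t. hmap l (collapse l t) k) \<longlongrightarrow> hmap l (collapse l t0) k) ?F"
      proof (cases "t0 \<in> open_cube l")
        case True
        have ev: "eventually (\<lambda>t. 0 < t i \<and> t i < pi) ?F" if "i < l" for i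
        proof -
          have "0 < t0 i" "t0 i < pi" using True that by (auto simp: open_cube_def)
          then show ?thesis using order_tendstoD(1)[OF P[of i], of 0] order_tendstoD(2)[OF P[of i], of pi]
            by (auto elim: eventually_elim2)
        qed
        have "eventually (\<lambda>t. \<forall>i\<in>{..<l}. 0 < t i \<and> t i < pi) ?F"
          using ev by (intro eventually_ball_finite) auto
        then have "eventually (\<lambda>t. t \<in> open_cube l) ?F"
          using ev_cube[of l t0] by eventually_elim (auto simp: open_cube_def cube_def)
        then have "eventually (\<lambda>t. phi l t k = hmap l (collapse l t) k) ?F"
          by eventually_elim (simp add: hmap_collapse)
        moreover have "((\<lambda>t. phi l t k) \<longlongrightarrow> phi l t0 k) ?F" by (rule phi_lim[OF True P])
        ultimately have "((\<lambda>t. hmap l (collapse l t) k) \<longlongrightarrow> phi l t0 k) ?F"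
          by (rule Lim_transform_eventually[rotated])
        then show ?thesis using True by (simp add: hmap_collapse)
      next
        case False
        obtain j where j: "j < l" "\<not> (0 < t0 j \<and> t0 j < pi)" using False t0 by (auto simp: open_cube_def cube_def)
        have "t0 j = 0 \<or> t0 j = pi" using j t0 by (auto simp: cube_def)
        then have sj: "sin (t0 j) = 0" by auto
        have bnd: "eventually (\<lambda>t. norm (hmap l (collapse l t) k - Npole l k) \<le> 2 * \<bar>sin (t j)\<bar>) ?F"
          using ev_cube[of l t0]
        proof eventually_elim
          case (elim t)
          show ?case
          proof (cases "t \<in> open_cube l")
            case True then show ?thesis using phi_bound[OF True j(1)] by (simp add: hmap_collapse)
          qed (simp add: hmap_collapse)
        qed
        have "((\<lambda>t. 2 * \<bar>sin (t j)\<bar>) \<longlongrightarrow> 2 * \<bar>sin (t0 j)\<bar>) ?F"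
          by (intro tendsto_intros P)
        then have "((\<lambda>t. 2 * \<bar>sin (t j)\<bar>) \<longlongrightarrow> 0) ?F" using sj by simp
        then have "((\<lambda>t. hmap l (collapse l t) k - Npole l k) \<longlongrightarrow> 0) ?F"
          by (rule Lim_null_comparison[OF bnd])
        then show ?thesis using False by (simp add: LIM_zero_iff hmap_collapse)
      qed
    qed
  qed
  have B: "\<forall>t. (\<Sum>i\<le>l. (hmap l (collapse l t) i)\<^sup>2) = 1 \<and> (\<forall>i>l. hmap l (collapse l t) i = 0)"
    using phi_sphere Npole_sphere by (auto simp: hmap_collapse)
  show ?thesis unfolding nsphere continuous_map_in_subtopology using A B by auto
qed

lemma cube_PiE: "cube l = Pi\<^sub>E UNIV (\<lambda>i. if i < l then {0..pi} else {0})"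
  by (auto simp: cube_def PiE_UNIV_domain Pi_iff split: if_splits)

lemma compact_Qc: "compact_space (Qc l)"
proof -
  have "compactin (powertop_real UNIV) (cube l)"
    unfolding cube_PiE compactin_PiE by auto
  then show ?thesis unfolding Qc_def by (rule compact_space_subtopology)
qed

lemma compact_cube_sphere: "compact_space (cube_sphere l)"
proof -
  have c: "continuous_map (Qc l) (cube_sphere l) (collapse l)"
    unfolding cube_sphere_quot by (rule quotient_imp_continuous_map[OF quotient_map_quot])
  have "compactin (cube_sphere l) (collapse l ` topspace (Qc l))"
    using image_compactin[OF compact_Qc[unfolded compact_space_def] c] .
  then show ?thesis unfolding compact_space_def topspace_cube_sphere by simp
qed

lemma Hausdorff_nsphere: "Hausdorff_space (nsphere l)"
  unfolding nsphere
  by (intro Hausdorff_space_subtopology) (simp add: Hausdorff_space_product_topology Hausdorff_space_euclidean)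

lemma topspace_nsphere_eq: "topspace (nsphere l) = {x. (\<Sum>i\<le>l. (x i)\<^sup>2) = 1 \<and> (\<forall>i>l. x i = 0)}"
  unfolding nsphere by simp

lemma cont_hmap: "continuous_map (cube_sphere l) (nsphere l) (hmap l)"
  unfolding cube_sphere_quot
  by (rule continuous_compose_quotient_map[OF quotient_map_quot]) (simp add: comp_def cont_Fc)

lemma homeo_hmap:
  assumes "0 < l"
  shows "homeomorphic_map (cube_sphere l) (nsphere l) (hmap l)"
proof (rule continuous_imp_homeomorphic_map[OF cont_hmap compact_cube_sphere Hausdorff_nsphere])
  have z: "(\<lambda>_. 0) \<in> cube l - open_cube l" using assms by (auto simp: cube_def open_cube_def)
  show "hmap l ` topspace (cube_sphere l) = topspace (nsphere l)"
  proof
    show "hmap l ` topspace (cube_sphere l) \<subseteq> topspace (nsphere l)"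
      unfolding topspace_cube_sphere topspace_nsphere_eq
      using phi_sphere Npole_sphere by (auto simp: hmap_collapse)
    show "topspace (nsphere l) \<subseteq> hmap l ` topspace (cube_sphere l)"
    proof
      fix x assume x: "x \<in> topspace (nsphere l)"
      show "x \<in> hmap l ` topspace (cube_sphere l)"
      proof (cases "x = Npole l")
        case True
        have "hmap l (collapse l (\<lambda>_. 0)) = x" using z True by (simp add: hmap_collapse)
        then show ?thesis using z unfolding topspace_cube_sphere by blast
      next
        case False
        then obtain t where t: "t \<in> open_cube l" "phi l t = x"
          using phi_surj[where x=x and l=l] x by (auto simp: topspace_nsphere_eq)
        then have "hmap l (collapse l t) = x" by (simp add: hmap_collapse)
        then show ?thesis using t open_cube_sub unfolding topspace_cube_sphere by blast
      qed
    qed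
  qed
  show "inj_on (hmap l) (topspace (cube_sphere l))"
  proof (rule inj_onI)
    fix z1 z2 assume z: "z1 \<in> topspace (cube_sphere l)" "z2 \<in> topspace (cube_sphere l)" "hmap l z1 = hmap l z2"
    obtain t1 where t1: "t1 \<in> cube l" "z1 = collapse l t1" using z(1) topspace_cube_sphere by auto
    obtain t2 where t2: "t2 \<in> cube l" "z2 = collapse l t2" using z(2) topspace_cube_sphere by auto
    have lt: "phi l t l \<noteq> Npole l l" for t using phi_l_lt1[of l t] by (simp add: Npole_def)
    show "z1 = z2"
    proof (cases "t1 \<in> open_cube l"; cases "t2 \<in> open_cube l")
      assume a: "t1 \<in> open_cube l" "t2 \<in> open_cube l"
      then have "phi l t1 = phi l t2" using z(3) t1 t2 by (simp add: hmap_collapse)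
      then show ?thesis using phi_inj a t1 t2 by (simp add: collapse_def)
    next
      assume a: "t1 \<in> open_cube l" "t2 \<notin> open_cube l"
      then have "phi l t1 = Npole l" using z(3) t1 t2 by (simp add: hmap_collapse)
      then show ?thesis using lt[of t1] by simp
    next
      assume a: "t1 \<notin> open_cube l" "t2 \<in> open_cube l"
      then have "phi l t2 = Npole l" using z(3) t1 t2 by (simp add: hmap_collapse)
      then show ?thesis using lt[of t2] by simp
    next
      assume a: "t1 \<notin> open_cube l" "t2 \<notin> open_cube l"
      then show ?thesis using t1 t2 by (simp add: collapse_def)
    qed
  qed
qed


lemma swp_open_cube: "Suc m < l \<Longrightarrow> t \<in> open_cube l \<Longrightarrow> swp m t \<in> open_cube l"
  by (auto simp: open_cube_def swp_apply)

lemma Sy_swp: "Suc m < l \<Longrightarrow> Sy l (swp m t) = Sy l t"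
proof -
  assume m: "Suc m < l"
  let ?tau = "Transposition.transpose m (Suc m)"
  have bij: "bij_betw ?tau {..<l} {..<l}"
    using m by (intro bij_betwI[where g="?tau"]) (auto simp: Transposition.transpose_def)
  have y: "ycot (swp m t) i = ycot t (?tau i)" for i
    by (simp add: ycot_def swp_def)
  show ?thesis
    unfolding Sy_def y using sum.reindex_bij_betw[OF bij, of "\<lambda>i. (ycot t i)\<^sup>2"] by simp
qed

lemma phi_swp: "Suc m < l \<Longrightarrow> phi l (swp m t) = swapS m (phi l t)"
proof (rule ext)
  fix k assume m: "Suc m < l"
  let ?tau = "Transposition.transpose m (Suc m)"
  have y: "ycot (swp m t) i = ycot t (?tau i)" for i
    by (simp add: ycot_def swp_def)
  have tk: "?tau k < l \<longleftrightarrow> k < l" "?tau k = l \<longleftrightarrow> k = l"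
    using m by (auto simp: Transposition.transpose_def)
  show "phi l (swp m t) k = swapS m (phi l t) k"
    unfolding swapS_def phi_def using tk by (simp add: Sy_swp[OF m] y)
qed

lemma swapS_Npole: "Suc m < l \<Longrightarrow> swapS m (Npole l) = Npole l"
  by (rule ext) (auto simp: swapS_def Npole_def Transposition.transpose_def)

lemma hmap_swap:
  assumes m: "Suc m < l" and z: "z \<in> topspace (cube_sphere l)"
  shows "hmap l (map_option (swp m) z) = swapS m (hmap l z)"
  using phi_swp[OF m] swapS_Npole[OF m] by (cases z) (auto simp: hmap_def)

lemma sigma_topspace:
  assumes m: "Suc m < l" and z: "z \<in> topspace (cube_sphere l)"
  shows "map_option (swp m) z \<in> topspace (cube_sphere l)"
proof -
  obtain t where t: "t \<in> cube l" "z = collapse l t" using z topspace_cube_sphere by auto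
  show ?thesis
  proof (cases "t \<in> open_cube l")
    case True
    then have "map_option (swp m) z = collapse l (swp m t)"
      using t swp_open_cube[OF m True] by (simp add: collapse_def)
    then show ?thesis using swp_open_cube[OF m True] open_cube_sub topspace_cube_sphere by auto
  next
    case False
    then show ?thesis using t z by (simp add: collapse_def)
  qed
qed

lemma cont_swapS: "Suc m \<le> n \<Longrightarrow> continuous_map (nsphere n) (nsphere n) (swapS m)"
  unfolding swapS_conj
  by (rule continuous_map_compose[OF cont_rotm continuous_map_compose[OF cont_reflS cont_rotp]])

lemma deg_cube_swap:
  assumes m: "Suc m < l"
  shows "map_degree l (cube_sphere l) (map_option (swp m)) = -1"
proof -
  obtain k where hk: "homeomorphic_maps (cube_sphere l) (nsphere l) (hmap l) k"
    using homeo_hmap[of l] m by (auto simp: homeomorphic_map_maps)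
  have ch: "continuous_map (cube_sphere l) (nsphere l) (hmap l)" and ck: "continuous_map (nsphere l) (cube_sphere l) k"
    and kh: "\<And>x. x \<in> topspace (cube_sphere l) \<Longrightarrow> k (hmap l x) = x"
    and hk': "\<And>y. y \<in> topspace (nsphere l) \<Longrightarrow> hmap l (k y) = y"
    using hk by (auto simp: homeomorphic_maps_def)
  have csw: "continuous_map (nsphere l) (nsphere l) (swapS m)" by (rule cont_swapS) (use m in auto)
  have eqs: "map_option (swp m) z = (k \<circ> swapS m \<circ> hmap l) z" if z: "z \<in> topspace (cube_sphere l)" for z
  proof -
    have "map_option (swp m) z = k (hmap l (map_option (swp m) z))"
      using kh[OF sigma_topspace[OF m z]] by simp
    also have "\<dots> = k (swapS m (hmap l z))" using hmap_swap[OF m z] by simp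
    finally show ?thesis by simp
  qed
  have cs: "continuous_map (cube_sphere l) (cube_sphere l) (map_option (swp m))"
    by (rule continuous_map_eq[where f="k \<circ> swapS m \<circ> hmap l"])
       (use continuous_map_compose[OF ch continuous_map_compose[OF csw ck]] eqs in \<open>auto simp: comp_assoc\<close>)
  have "map_degree l (cube_sphere l) (map_option (swp m))
      = map_degree l (nsphere l) (hmap l \<circ> map_option (swp m) \<circ> k)"
    by (rule map_degree_conj[OF hk cs])
  also have "\<dots> = Brouwer_degree2 l (hmap l \<circ> map_option (swp m) \<circ> k)"
    by (rule map_degree_nsphere)
  also have "\<dots> = Brouwer_degree2 l (swapS m)"
  proof (rule Brouwer_degree2_eq)
    fix y assume y: "y \<in> topspace (nsphere l)"
    have ky: "k y \<in> topspace (cube_sphere l)" using continuous_map_image_subset_topspace[OF ck] y by blast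
    show "(hmap l \<circ> map_option (swp m) \<circ> k) y = swapS m y"
      using hmap_swap[OF m ky] hk'[OF y] by simp
  qed
  also have "\<dots> = -1" by (rule deg_swapS) (use m in auto)
  finally show ?thesis .
qed

theorem lemma4p5:
  fixes n :: nat and w :: "nat \<Rightarrow> nat" and u uc :: "nat list"
  assumes "w permutes {1..n}"
    and "reduced_word n w u"
    and "reduced_word n w uc"
    and "one_commutation u uc"
  shows "map_degree (perm_length n w) (cube_sphere (perm_length n w)) (transition n u uc) = -1"
proof -
  obtain p q a b where ab: "2 \<le> \<bar>int a - int b\<bar>" "u = p @ [a, b] @ q" "uc = p @ [b, a] @ q"
    using assms(4) by (auto simp: one_commutation_def)
  define l where "l = perm_length n w"
  have wu: "is_word n u" "word_perm u = w" "length u = l" using assms(2) by (auto simp: reduced_word_def l_def)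
  have wuc: "is_word n uc" "word_perm uc = w" "length uc = l" using assms(3) by (auto simp: reduced_word_def l_def)
  define m where "m = length p"
  have m: "Suc m < l" using wu(3) ab(2) by (simp add: m_def)
  have red_uc: "length uc = perm_length n (word_perm uc)" using wuc by (simp add: l_def)
  have comm: "Phi n u t = Phi n uc (swp m t)" for t
  proof -
    have "eqr n (Gm n u t) (Gm n uc (swp m t))"
      using Gm_commutation[of n p a b q t] wu(1) ab by (simp add: m_def)
    then show ?thesis by (simp add: Phi_Gm flag_eqr)
  qed
  have tr: "transition n u uc z = map_option (swp m) z" if z: "z \<in> topspace (cube_sphere l)" for z
  proof -
    obtain t where t: "t \<in> cube l" "z = collapse l t" using z topspace_cube_sphere by auto
    show ?thesis
    proof (cases "t \<in> open_cube l")
      case False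
      then have "z = None" using t by (simp add: collapse_def)
      then show ?thesis by (simp add: transition_def)
    next
      case True
      then have zt: "z = Some t" using t by (simp add: collapse_def)
      have so: "swp m t \<in> open_cube (length uc)" using swp_open_cube[OF m True] wuc(3) by simp
      have "(THE s. s \<in> open_cube (length uc) \<and> Phi n uc s = Phi n u t) = swp m t"
      proof (rule the_equality)
        show "swp m t \<in> open_cube (length uc) \<and> Phi n uc (swp m t) = Phi n u t"
          using so comm[of t] by simp
      next
        fix s assume s: "s \<in> open_cube (length uc) \<and> Phi n uc s = Phi n u t"
        then have "Phi n uc s = Phi n uc (swp m t)" using comm[of t] by simp
        then show "s = swp m t" using Phi_inj[OF wuc(1) red_uc _ so] s by blast
      qed
      moreover have "transition n u uc z = Some (THE s. s \<in> open_cube (length uc) \<and> Phi n uc s = Phi n u t)"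
        unfolding zt transition_def by (simp only: option.case)
      ultimately show ?thesis using zt by simp
    qed
  qed
  have "map_degree l (cube_sphere l) (transition n u uc) = map_degree l (cube_sphere l) (map_option (swp m))"
    by (rule map_degree_cong) (rule tr)
  also have "\<dots> = -1" by (rule deg_cube_swap[OF m])
  finally show ?thesis by (simp add: l_def)
qed


end
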